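(* Let $0\le\underline\sigma\le\overline\sigma$ and let $\{X_i\}_{i\ge1}$ be a sequence with $X_i=V_i\eta_i$, where each $V_i\sim\mathcal M[\underline\sigma,\overline\sigma]$, each $\eta_i$ is classically distributed and standardized, and $V_i\dashrightarrow\eta_i$. Suppose the $X_i$ are semi-$G$-i.i.d., and have certain zero mean and uncertain variance with $\underline\sigma^2=-\hat{\mathbb E}[-X_1^2]\le\hat{\mathbb E}[X_1^2]=\overline\sigma^2$. Let $W\sim\hat N(0,[\underline\sigma^2,\overline\sigma^2])$. Then $\frac1{\sqrt n}\sum_{i=1}^nX_i$ converges in distribution to $W$; specifically, for every bounded continuous $\varphi:\mathbb R\to\mathbb R$, $$\lim_{n\to\infty}\hat{\mathbb E}\Big[\varphi\Big(\tfrac1{\sqrt n}\sum_{i=1}^nX_i\Big)\Big]=\hat{\mathbb E}[\varphi(W)].$$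
   Context: Sublinear expectation space $(\Omega,\mathcal H,\hat{\mathbb E})$ with $\hat{\mathbb E}[X]=\sup_{Q\in\mathcal P}E_Q[X]$ (monotone, constant-preserving, sub-additive, positively homogeneous). $C_{b,Lip}$: bounded Lipschitz functions; $C_{l.Lip}(\mathbb R^d)$: $|\varphi(x)-\varphi(y)|\le C(1+|x|^k+|y|^k)|x-y|$. $X\dashrightarrow Y$ ($Y$ independent from $X$) means $\hat{\mathbb E}[\varphi(X,Y)]=\hat{\mathbb E}[\hat{\mathbb E}[\varphi(x,Y)]_{x=X}]$ for all $\varphi\in C_{b,Lip}$; $X_1\dashrightarrow\cdots\dashrightarrow X_n$ means $(X_1,\dots,X_i)\dashrightarrow X_{i+1}$ for all $i$. $V\sim\mathcal M[\underline\sigma,\overline\sigma]$ means $\hat{\mathbb E}[\varphi(V)]=\max_{v\in[\underline\sigma,\overline\sigma]}\varphi(v)$ for $\varphi\in C_{l.Lip}$. A random variable $\eta$ is classically distributed if $\hat{\mathbb E}[\varphi(\eta)]=E_P[\varphi(\xi)]$ for a classical random variable $\xi$; it is standardized if $E_P[\xi]=0$, $E_P[\xi^2]=1$. $\epsilon\sim N(0,1)$ means this holds with $\xi$ standard normal. Semi-$G$-normal $W\sim\hat N(0,[\underline\sigma^2,\overline\sigma^2])$: $W=V\epsilon$ with $V\sim\mathcal M[\underline\sigma,\overline\sigma]$, $\epsilon\sim N(0,1)$, $V\dashrightarrow\epsilon$. Semi-$G$-independence of $X_1,\dots,X_n$ (with $X_i=V_i\eta_i$): $(V_1,\dots,V_n)\dashrightarrow(\eta_1,\dots,\eta_n)$,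 $V_1\dashrightarrow\cdots\dashrightarrow V_n$, and $\eta_1,\dots,\eta_n$ classically independent (their joint $\hat{\mathbb E}$ equals the classical expectation of independent copies). Semi-$G$-i.i.d.: identically distributed ($\hat{\mathbb E}[\varphi(X_i)]=\hat{\mathbb E}[\varphi(X_1)]$ for $\varphi\in C_{b,Lip}$) and semi-$G$-independent for every $n$. Certain zero mean: $\hat{\mathbb E}[X_1]=-\hat{\mathbb E}[-X_1]=0$. Convergence in distribution $Z_n\to Z$: $\hat{\mathbb E}[\varphi(Z_n)]\to\hat{\mathbb E}[\varphi(Z)]$ for all $\varphi\in C_{b,Lip}$. *)

theory Defs
  imports "HOL-Probability.Probability"
begin

text \<open>The sublinear expectation space is represented by a measurable space M (Omega with
its sigma-algebra) and a nonempty family P of probability measures on it;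
the sublinear expectation is the upper expectation sup over Q in P of E_Q.\<close>

definition sle_space :: "'w measure \<Rightarrow> 'w measure set \<Rightarrow> bool" where
  "sle_space M P \<longleftrightarrow> P \<noteq> {} \<and> (\<forall>Q\<in>P. prob_space Q \<and> sets Q = sets M)"

definition sexp :: "'w measure set \<Rightarrow> ('w \<Rightarrow> real) \<Rightarrow> real" where
  "sexp P X = (SUP Q\<in>P. integral\<^sup>L Q X)"

text \<open>Functions on R^n are represented as functions on real lists of length n.\<close>

definition list_dist :: "nat \<Rightarrow> real list \<Rightarrow> real list \<Rightarrow> real" where
  "list_dist n x y = sqrt (\<Sum>i<n. (x ! i - y ! i)^2)"

definition bLip :: "nat \<Rightarrow> (real list \<Rightarrow> real) \<Rightarrow> bool" where
  "bLip n \<phi> \<longleftrightarrow>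
     (\<exists>B. \<forall>x. length x = n \<longrightarrow> \<bar>\<phi> x\<bar> \<le> B) \<and>
     (\<exists>L. \<forall>x y. length x = n \<longrightarrow> length y = n \<longrightarrow> \<bar>\<phi> x - \<phi> y\<bar> \<le> L * list_dist n x y)"

definition bLip1 :: "(real \<Rightarrow> real) \<Rightarrow> bool" where
  "bLip1 \<phi> \<longleftrightarrow> (\<exists>B. \<forall>x. \<bar>\<phi> x\<bar> \<le> B) \<and> (\<exists>L. \<forall>x y. \<bar>\<phi> x - \<phi> y\<bar> \<le> L * \<bar>x - y\<bar>)"

definition lLip1 :: "(real \<Rightarrow> real) \<Rightarrow> bool" where
  "lLip1 \<phi> \<longleftrightarrow> (\<exists>C k. \<forall>x y. \<bar>\<phi> x - \<phi> y\<bar> \<le> C * (1 + \<bar>x\<bar>^k + \<bar>y\<bar>^k) * \<bar>x - y\<bar>)"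

definition rvec :: "('w \<Rightarrow> real) list \<Rightarrow> 'w \<Rightarrow> real list" where
  "rvec Xs w = map (\<lambda>X. X w) Xs"

text \<open>sl_indep P Xs Ys : the random vector Ys is independent from the random vector Xs.\<close>
definition sl_indep :: "'w measure set \<Rightarrow> ('w \<Rightarrow> real) list \<Rightarrow> ('w \<Rightarrow> real) list \<Rightarrow> bool" where
  "sl_indep P Xs Ys \<longleftrightarrow>
     (\<forall>\<phi>. bLip (length Xs + length Ys) \<phi> \<longrightarrow>
        sexp P (\<lambda>w. \<phi> (rvec Xs w @ rvec Ys w)) =
        sexp P (\<lambda>w. sexp P (\<lambda>w'. \<phi> (rvec Xs w @ rvec Ys w'))))"

definition maximal_dist :: "'w measure set \<Rightarrow> ('w \<Rightarrow> real) \<Rightarrow> real \<Rightarrow> real \<Rightarrow> bool" where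
  "maximal_dist P V a b \<longleftrightarrow>
     (\<forall>\<phi>. lLip1 \<phi> \<longrightarrow> sexp P (\<lambda>w. \<phi> (V w)) = (SUP v\<in>{a..b}. \<phi> v))"

definition classical_dist :: "'w measure set \<Rightarrow> ('w \<Rightarrow> real) \<Rightarrow> real measure \<Rightarrow> bool" where
  "classical_dist P \<eta> \<mu> \<longleftrightarrow> prob_space \<mu> \<and> sets \<mu> = sets borel \<and>
     (\<forall>\<phi>. bLip1 \<phi> \<longrightarrow> sexp P (\<lambda>w. \<phi> (\<eta> w)) = (\<integral>x. \<phi> x \<partial>\<mu>))"

definition standardized :: "real measure \<Rightarrow> bool" where
  "standardized \<mu> \<longleftrightarrow> integrable \<mu> (\<lambda>x. x) \<and> integrable \<mu> (\<lambda>x. x^2) \<and>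
     (\<integral>x. x \<partial>\<mu>) = 0 \<and> (\<integral>x. x^2 \<partial>\<mu>) = 1"

definition classical_indep :: "'w measure set \<Rightarrow> ('w \<Rightarrow> real) list \<Rightarrow> (nat \<Rightarrow> real measure) \<Rightarrow> bool" where
  "classical_indep P etas mus \<longleftrightarrow>
     (\<forall>\<phi>. bLip (length etas) \<phi> \<longrightarrow>
        sexp P (\<lambda>w. \<phi> (rvec etas w)) =
        (\<integral>x. \<phi> (map x [0..<length etas]) \<partial>(PiM {..<length etas} mus)))"

text \<open>W ~ semi-G-normal N(0,[a^2,b^2]) on the given space\<close>
definition semiG_normal :: "'w measure \<Rightarrow> 'w measure set \<Rightarrow> ('w \<Rightarrow> real) \<Rightarrow> real \<Rightarrow> real \<Rightarrow> bool" where
  "semiG_normal M P W a b \<longleftrightarrow>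
     (\<exists>V \<epsilon>. V \<in> borel_measurable M \<and> \<epsilon> \<in> borel_measurable M \<and>
        maximal_dist P V a b \<and>
        classical_dist P \<epsilon> (density lborel std_normal_density) \<and>
        sl_indep P [V] [\<epsilon>] \<and> (\<forall>w. W w = V w * \<epsilon> w))"

end

theory Submission
  imports Defs
begin


lemma list_dist_L2: "list_dist m x y = L2_set (\<lambda>i. x!i - y!i) {..<m}"
  by (simp add: list_dist_def L2_set_def)

lemma list_dist_nonneg: "list_dist m x y \<ge> 0"
  by (simp add: list_dist_def sum_nonneg)

lemma list_dist_self: "list_dist m x x = 0"
  by (simp add: list_dist_def)

lemma list_dist_sym: "list_dist m x y = list_dist m y x"
  unfolding list_dist_def by (simp add: power2_commute)

lemma list_dist_triangle: "list_dist m x z \<le> list_dist m x y + list_dist m y z"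
  unfolding list_dist_L2 using L2_set_triangle_ineq[of "\<lambda>i. x!i - y!i" "\<lambda>i. y!i - z!i" "{..<m}"]
  by simp

lemma list_dist_coord: "i < m \<Longrightarrow> \<bar>x!i - y!i\<bar> \<le> list_dist m x y"
proof -
  assume "i < m"
  have "\<bar>x!i - y!i\<bar> \<le> L2_set (\<lambda>i. \<bar>x!i - y!i\<bar>) {..<m}"
    using member_le_L2_set[of "{..<m}" i "\<lambda>i. \<bar>x!i - y!i\<bar>"] \<open>i<m\<close> by simp
  also have "\<dots> = list_dist m x y" by (simp add: L2_set_def list_dist_def)
  finally show ?thesis .
qed

lemma list_dist_append:
  assumes "length v = n" "length v' = n"
  shows "list_dist (n + k) (v @ a) (v' @ a) = list_dist n v v'"
proof -
  have "(\<Sum>i<n+k. ((v @ a)!i - (v' @ a)!i)^2) = (\<Sum>i<n. ((v @ a)!i - (v' @ a)!i)^2)"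
    by (rule sum.mono_neutral_right) (auto simp: nth_append assms)
  also have "\<dots> = (\<Sum>i<n. (v!i - v'!i)^2)"
    by (rule sum.cong) (auto simp: nth_append assms)
  finally show ?thesis by (simp add: list_dist_def)
qed

lemma list_dist_single: "list_dist 1 [x] [y] = \<bar>x - y\<bar>"
  by (simp add: list_dist_def)

definition lcont :: "nat \<Rightarrow> (real list \<Rightarrow> real) \<Rightarrow> bool" where
  "lcont m f \<longleftrightarrow> (\<forall>x ys. length x = m \<longrightarrow> (\<forall>k. length (ys k) = m) \<longrightarrow>
      (\<lambda>k. list_dist m (ys k) x) \<longlonglongrightarrow> 0 \<longrightarrow> (\<lambda>k. f (ys k)) \<longlonglongrightarrow> f x)"

lemma lcont_coord:
  assumes "(\<lambda>k. list_dist m (ys k) x) \<longlonglongrightarrow> 0" "i < m"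
  shows "(\<lambda>k. ys k ! i) \<longlonglongrightarrow> x ! i"
proof -
  have "(\<lambda>k. ys k ! i - x ! i) \<longlonglongrightarrow> 0"
    by (rule Lim_null_comparison[OF _ assms(1)])
       (use list_dist_coord[OF assms(2)] in auto)
  then show ?thesis by (simp add: LIM_zero_iff)
qed

lemma lcontI:
  assumes "\<And>x ys. length x = m \<Longrightarrow> (\<And>k. length (ys k) = m) \<Longrightarrow>
      (\<And>i. i < m \<Longrightarrow> (\<lambda>k. ys k ! i) \<longlonglongrightarrow> x ! i) \<Longrightarrow> (\<lambda>k. f (ys k)) \<longlonglongrightarrow> f x"
  shows "lcont m f"
  unfolding lcont_def using assms lcont_coord by blast

lemma bLip_lcont:
  assumes "bLip m f" shows "lcont m f"
proof -
  from assms obtain L where L: "\<And>x y. length x = m \<Longrightarrow> length y = m \<Longrightarrow> \<bar>f x - f y\<bar> \<le> L * list_dist m x y"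
    unfolding bLip_def by blast
  show ?thesis unfolding lcont_def
  proof (intro allI impI)
    fix x ys assume x: "length x = m" and ys: "\<forall>k. length (ys k) = m"
      and d: "(\<lambda>k. list_dist m (ys k) x) \<longlonglongrightarrow> 0"
    have "(\<lambda>k. L * list_dist m (ys k) x) \<longlonglongrightarrow> 0"
      using tendsto_mult_right_zero[OF d] by simp
    then have "(\<lambda>k. f (ys k) - f x) \<longlonglongrightarrow> 0"
      by (rule Lim_null_comparison[rotated]) (use L x ys in auto)
    then show "(\<lambda>k. f (ys k)) \<longlonglongrightarrow> f x" by (simp add: LIM_zero_iff)
  qed
qed

lemma rvec_length[simp]: "length (rvec Zs w) = length Zs"
  by (simp add: rvec_def)

lemma rvec_append: "rvec (Xs @ Ys) w = rvec Xs w @ rvec Ys w"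
  by (simp add: rvec_def)

lemma rvec_nth[simp]: "i < length Zs \<Longrightarrow> rvec Zs w ! i = (Zs ! i) w"
  by (simp add: rvec_def)

lemma lcont_measurable:
  assumes f: "lcont m f" and len: "length Zs = m"
    and meas: "\<And>Z. Z \<in> set Zs \<Longrightarrow> Z \<in> borel_measurable M"
  shows "(\<lambda>w. f (rvec Zs w)) \<in> borel_measurable M"
proof -
  define z where "z w = (\<lambda>i::nat. if i < m then (Zs!i) w else 0)" for w
  have zm: "z \<in> borel_measurable M"
    unfolding z_def
  proof (rule measurable_coordinatewise_then_product)
    fix i show "(\<lambda>x. if i < m then (Zs ! i) x else 0) \<in> borel_measurable M"
      using meas[of "Zs!i"] len by (cases "i < m") auto
  qed
  define G where "G y = f (map y [0..<m])" for y :: "nat \<Rightarrow> real"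
  have "isCont G y" for y
  proof (unfold continuous_at_sequentially comp_def, intro allI impI)
    fix yk assume yk: "yk \<longlonglongrightarrow> y"
    have c: "(\<lambda>k. yk k i) \<longlonglongrightarrow> y i" for i
    proof -
      have "isCont (\<lambda>x::nat\<Rightarrow>real. x i) y"
        using continuous_on_product_coordinates[of i] continuous_on_eq_continuous_at open_UNIV by blast
      from isCont_tendsto_compose[OF this yk] show ?thesis .
    qed
    have "(\<lambda>k. list_dist m (map (yk k) [0..<m]) (map y [0..<m])) \<longlonglongrightarrow>
          sqrt (\<Sum>i<m. (y i - y i)^2)"
      unfolding list_dist_def
      by (intro tendsto_intros) (auto intro!: c)
    then have "(\<lambda>k. list_dist m (map (yk k) [0..<m]) (map y [0..<m])) \<longlonglongrightarrow> 0" by simp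
    with f show "(\<lambda>k. G (yk k)) \<longlonglongrightarrow> G y"
      unfolding lcont_def G_def by auto
  qed
  then have "continuous_on UNIV G"
    by (simp add: continuous_at_imp_continuous_on)
  then have Gm: "G \<in> borel_measurable borel"
    by (rule borel_measurable_continuous_onI)
  have eq: "f (rvec Zs w) = G (z w)" for w
  proof -
    have "rvec Zs w = map (z w) [0..<m]"
      by (rule nth_equalityI) (auto simp: len z_def)
    then show ?thesis by (simp add: G_def)
  qed
  show ?thesis unfolding eq using measurable_compose[OF zm Gm] by (simp add: comp_def)
qed

section \<open>Inf-convolution approximation\<close>

definition infconv :: "nat \<Rightarrow> (real list \<Rightarrow> real) \<Rightarrow> nat \<Rightarrow> real list \<Rightarrow> real" where
  "infconv m f k x = (INF y\<in>{y. length y = m}. f y + real k * list_dist m x y)"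

context
  fixes m :: nat and f :: "real list \<Rightarrow> real" and B :: real
  assumes fB: "\<And>y. length y = m \<Longrightarrow> \<bar>f y\<bar> \<le> B"
begin

lemma infconv_ne: "{y::real list. length y = m} \<noteq> {}"
  by (auto intro!: exI[of _ "replicate m 0"])

lemma infconv_bdd: "bdd_below ((\<lambda>y. f y + real k * list_dist m x y) ` {y. length y = m})"
proof (rule bdd_belowI[of _ "-B"])
  fix z assume "z \<in> (\<lambda>y. f y + real k * list_dist m x y) ` {y. length y = m}"
  then obtain y where "length y = m" "z = f y + real k * list_dist m x y" by auto
  moreover have "real k * list_dist m x y \<ge> 0" by (simp add: list_dist_nonneg)
  ultimately show "-B \<le> z" using fB[of y] by linarith
qed

lemma infconv_le: "length x = m \<Longrightarrow> infconv m f k x \<le> f x"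
  unfolding infconv_def
  using cINF_lower[OF infconv_bdd, of x k x] by (simp add: list_dist_self)

lemma infconv_ge: "-B \<le> infconv m f k x"
  unfolding infconv_def
proof (rule cINF_greatest[OF infconv_ne])
  fix y :: "real list" assume "y \<in> {y. length y = m}"
  then show "-B \<le> f y + real k * list_dist m x y"
    using fB[of y] list_dist_nonneg[of m x y] by (auto intro: add_increasing2 order_trans[of _ "f y"])
qed

lemma infconv_abs: "length x = m \<Longrightarrow> \<bar>infconv m f k x\<bar> \<le> B"
  using infconv_le[of x k] infconv_ge[of k x] fB[of x] by linarith

lemma infconv_mono: "k \<le> k' \<Longrightarrow> infconv m f k x \<le> infconv m f k' x"
  unfolding infconv_def
proof (rule cINF_mono[OF infconv_ne infconv_bdd])
  fix y :: "real list" assume "k \<le> k'" "y \<in> {y. length y = m}"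
  then show "\<exists>n\<in>{y. length y = m}. f n + real k * list_dist m x n \<le> f y + real k' * list_dist m x y"
    by (intro bexI[of _ y]) (auto intro!: mult_right_mono list_dist_nonneg)
qed

lemma infconv_lip1:
  "infconv m f k x \<le> infconv m f k x' + real k * list_dist m x x'"
proof -
  have "infconv m f k x - real k * list_dist m x x' \<le> infconv m f k x'"
    unfolding infconv_def[of m f k x']
  proof (rule cINF_greatest[OF infconv_ne])
    fix y :: "real list" assume y: "y \<in> {y. length y = m}"
    have "infconv m f k x \<le> f y + real k * list_dist m x y"
      unfolding infconv_def using cINF_lower[OF infconv_bdd y] .
    also have "\<dots> \<le> f y + real k * (list_dist m x x' + list_dist m x' y)"
      by (intro add_left_mono mult_left_mono list_dist_triangle) auto
    finally show "infconv m f k x - real k * list_dist m x x' \<le> f y + real k * list_dist m x' y"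
      by (simp add: algebra_simps)
  qed
  then show ?thesis by simp
qed

lemma infconv_bLip: "bLip m (infconv m f k)"
  unfolding bLip_def
proof (intro conjI exI allI impI)
  fix x :: "real list" assume "length x = m"
  then show "\<bar>infconv m f k x\<bar> \<le> B" by (rule infconv_abs)
next
  fix x y :: "real list"
  show "\<bar>infconv m f k x - infconv m f k y\<bar> \<le> real k * list_dist m x y"
    using infconv_lip1[of k x y] infconv_lip1[of k y x] list_dist_sym[of m x y]
    by (simp add: abs_le_iff)
qed

lemma infconv_tendsto:
  assumes fc: "lcont m f" and x: "length x = m"
  shows "(\<lambda>k. infconv m f k x) \<longlonglongrightarrow> f x"
proof -
  have near: "\<exists>k. infconv m f k x > f x - e" if e: "e > 0" for e
  proof (rule ccontr)
    assume "\<not> ?thesis"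
    then have le: "infconv m f k x \<le> f x - e" for k by (simp add: not_less)
    have "\<exists>y. length y = m \<and> f y + real k * list_dist m x y < f x - e/2" for k
    proof -
      have "infconv m f k x < f x - e/2" using le[of k] e by linarith
      then show ?thesis unfolding infconv_def
        by (subst (asm) cINF_less_iff[OF infconv_ne infconv_bdd]) auto
    qed
    then obtain ys where ys: "\<And>k. length (ys k) = m"
      "\<And>k. f (ys k) + real k * list_dist m x (ys k) < f x - e/2"
      by metis
    have bound: "list_dist m (ys k) x \<le> 2 * B / real k" if "k \<ge> 1" for k
    proof -
      have "real k * list_dist m x (ys k) \<le> 2 * B"
        using ys(2)[of k] fB[OF ys(1)[of k]] fB[OF x] e by linarith
      then show ?thesis using that by (simp add: field_simps list_dist_sym)
    qed
    have "(\<lambda>k. 2 * B / real k) \<longlonglongrightarrow> 0"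
      by (intro tendsto_divide_0[OF tendsto_const] filterlim_real_sequentially[THEN filterlim_at_top_imp_at_infinity])
    then have "(\<lambda>k. list_dist m (ys k) x) \<longlonglongrightarrow> 0"
    proof (rule Lim_null_comparison[rotated])
      show "\<forall>\<^sub>F k in sequentially. norm (list_dist m (ys k) x) \<le> 2 * B / real k"
        using eventually_ge_at_top[of 1] by eventually_elim (use bound list_dist_nonneg in auto)
    qed
    with fc x ys(1) have lim: "(\<lambda>k. f (ys k)) \<longlonglongrightarrow> f x" unfolding lcont_def by blast
    have "f (ys k) \<le> f x - e/2" for k
      using ys(2)[of k] list_dist_nonneg[of m x "ys k"] by (smt (verit) of_nat_0_le_iff mult_nonneg_nonneg)
    then have "f x \<le> f x - e/2"
      using lim by (intro tendsto_upperbound[OF lim]) auto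
    then show False using e by simp
  qed
  show ?thesis
  proof (rule LIMSEQ_I)
    fix r :: real assume r: "r > 0"
    then obtain K where K: "infconv m f K x > f x - r" using near by blast
    show "\<exists>no. \<forall>n\<ge>no. norm (infconv m f n x - f x) < r"
    proof (intro exI allI impI)
      fix n assume "K \<le> n"
      then have "infconv m f K x \<le> infconv m f n x" by (rule infconv_mono)
      then show "norm (infconv m f n x - f x) < r"
        using K infconv_le[OF x, of n] by simp
    qed
  qed
qed

end


lemma prob_bounded_integrable:
  fixes f :: "'a \<Rightarrow> real"
  assumes "prob_space Q" "f \<in> borel_measurable Q" "\<And>w. \<bar>f w\<bar> \<le> B"
  shows "integrable Q f" "\<bar>integral\<^sup>L Q f\<bar> \<le> B"
proof -
  interpret prob_space Q by fact
  show i: "integrable Q f"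
    by (rule integrable_const_bound[where B=B]) (use assms in auto)
  have "\<bar>integral\<^sup>L Q f\<bar> \<le> integral\<^sup>L Q (\<lambda>x. \<bar>f x\<bar>)"
    by (rule integral_abs_bound)
  also have "\<dots> \<le> integral\<^sup>L Q (\<lambda>_. B)"
    by (rule integral_mono) (use assms i in auto)
  also have "\<dots> = B" by (simp add: prob_space)
  finally show "\<bar>integral\<^sup>L Q f\<bar> \<le> B" .
qed

lemma prob_int_tendsto:
  fixes f :: "nat \<Rightarrow> 'a \<Rightarrow> real"
  assumes "prob_space Q" "\<And>k. f k \<in> borel_measurable Q" "g \<in> borel_measurable Q"
    "\<And>k w. \<bar>f k w\<bar> \<le> B" "\<And>w. (\<lambda>k. f k w) \<longlonglongrightarrow> g w"
  shows "(\<lambda>k. integral\<^sup>L Q (f k)) \<longlonglongrightarrow> integral\<^sup>L Q g"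
proof -
  interpret prob_space Q by fact
  show ?thesis
    by (rule integral_dominated_convergence[where w="\<lambda>_. B"]) (use assms in auto)
qed

context
  fixes M :: "'w measure" and P :: "'w measure set"
  assumes sle: "sle_space M P"
begin

lemma sleQ: "Q \<in> P \<Longrightarrow> prob_space Q" "Q \<in> P \<Longrightarrow> sets Q = sets M"
  using sle unfolding sle_space_def by auto

lemma sleP: "P \<noteq> {}" using sle unfolding sle_space_def by auto

lemma measQ: "Q \<in> P \<Longrightarrow> f \<in> borel_measurable M \<Longrightarrow> f \<in> borel_measurable Q"
  using measurable_cong_sets[OF sleQ(2) refl] by blast

lemma intQ:
  fixes f :: "'w \<Rightarrow> real"
  assumes "Q \<in> P" "f \<in> borel_measurable M" "\<And>w. \<bar>f w\<bar> \<le> B"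
  shows "integrable Q f" "\<bar>integral\<^sup>L Q f\<bar> \<le> B"
  using prob_bounded_integrable[OF sleQ(1)[OF assms(1)] measQ[OF assms(1,2)] assms(3)] by auto

lemma sexp_bdd:
  fixes f :: "'w \<Rightarrow> real"
  assumes "f \<in> borel_measurable M" "\<And>w. \<bar>f w\<bar> \<le> B"
  shows "bdd_above ((\<lambda>Q. integral\<^sup>L Q f) ` P)"
  using intQ(2)[OF _ assms] by (intro bdd_aboveI[of _ B]) (auto simp: abs_le_iff)

lemma sexp_upper:
  assumes "f \<in> borel_measurable M" "\<And>w. \<bar>f w\<bar> \<le> B" "Q \<in> P"
  shows "integral\<^sup>L Q f \<le> sexp P f"
  unfolding sexp_def by (rule cSUP_upper[OF assms(3) sexp_bdd[OF assms(1,2)]])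

lemma sexp_least:
  assumes "\<And>Q. Q \<in> P \<Longrightarrow> integral\<^sup>L Q f \<le> c"
  shows "sexp P f \<le> c"
  unfolding sexp_def by (rule cSUP_least[OF sleP assms])

lemma sexp_abs:
  assumes "f \<in> borel_measurable M" "\<And>w. \<bar>f w\<bar> \<le> B"
  shows "\<bar>sexp P f\<bar> \<le> B"
proof -
  obtain Q where Q: "Q \<in> P" using sleP by auto
  have "sexp P f \<le> B" by (rule sexp_least) (use intQ(2)[OF _ assms] abs_le_D1 in blast)
  moreover have "-B \<le> sexp P f"
    using sexp_upper[OF assms Q] intQ(2)[OF Q assms] by (auto simp: abs_le_iff)
  ultimately show ?thesis by auto
qed

lemma sexp_mono:
  assumes "f \<in> borel_measurable M" "\<And>w. \<bar>f w\<bar> \<le> B"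
    "g \<in> borel_measurable M" "\<And>w. \<bar>g w\<bar> \<le> B'" "\<And>w. f w \<le> g w"
  shows "sexp P f \<le> sexp P g"
proof (rule sexp_least)
  fix Q assume Q: "Q \<in> P"
  have "integral\<^sup>L Q f \<le> integral\<^sup>L Q g"
    by (rule integral_mono) (use intQ(1)[OF Q assms(1,2)] intQ(1)[OF Q assms(3,4)] assms(5) in auto)
  also have "\<dots> \<le> sexp P g" by (rule sexp_upper[OF assms(3,4) Q])
  finally show "integral\<^sup>L Q f \<le> sexp P g" .
qed

lemma sexp_const: "sexp P (\<lambda>_. c) = c"
proof -
  have "integral\<^sup>L Q (\<lambda>_. c) = c" if "Q \<in> P" for Q
    using prob_space.prob_space[OF sleQ(1)[OF that]] by simp
  then have "(SUP Q\<in>P. integral\<^sup>L Q (\<lambda>_. c)) = (SUP Q\<in>P. c)"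
    by (intro SUP_cong) auto
  then show ?thesis unfolding sexp_def using sleP
    by (simp add: cSUP_const)
qed

lemma sexp_lip:
  assumes "f \<in> borel_measurable M" "\<And>w. \<bar>f w\<bar> \<le> B"
    "g \<in> borel_measurable M" "\<And>w. \<bar>g w\<bar> \<le> B'" "\<And>w. \<bar>f w - g w\<bar> \<le> C"
  shows "\<bar>sexp P f - sexp P g\<bar> \<le> C"
proof -
  have one: "sexp P f \<le> sexp P g + C"
    if fm: "f \<in> borel_measurable M" "\<And>w. \<bar>f w\<bar> \<le> B"
    and gm: "g \<in> borel_measurable M" "\<And>w. \<bar>g w\<bar> \<le> B'" and d: "\<And>w. \<bar>f w - g w\<bar> \<le> C"
    for f g B B'
  proof (rule sexp_least)
    fix Q assume Q: "Q \<in> P"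
    interpret prob_space Q using sleQ(1)[OF Q] .
    have dd: "f w \<le> g w + C" for w using abs_le_D1[OF d[of w]] by linarith
    have "integral\<^sup>L Q f \<le> integral\<^sup>L Q (\<lambda>w. g w + C)"
      by (rule integral_mono) (use intQ(1)[OF Q fm] intQ(1)[OF Q gm] dd in auto)
    also have "\<dots> = integral\<^sup>L Q g + C"
      using intQ(1)[OF Q gm] by (simp add: prob_space)
    also have "\<dots> \<le> sexp P g + C" using sexp_upper[OF gm Q] by simp
    finally show "integral\<^sup>L Q f \<le> sexp P g + C" .
  qed
  show ?thesis
    using one[OF assms] one[OF assms(3,4,1,2)] assms(5) by (force simp: abs_le_iff abs_minus_commute)
qed

lemma sexp_incseq_tendsto:
  assumes fm: "\<And>k. f k \<in> borel_measurable M" and gm: "g \<in> borel_measurable M"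
    and fB: "\<And>k w. \<bar>f k w\<bar> \<le> B"
    and inc: "\<And>k k' w. k \<le> k' \<Longrightarrow> f k w \<le> f k' w"
    and lim: "\<And>w. (\<lambda>k. f k w) \<longlonglongrightarrow> g w"
  shows "(\<lambda>k. sexp P (f k)) \<longlonglongrightarrow> sexp P g"
proof -
  have gB: "\<bar>g w\<bar> \<le> B" for w
  proof -
    have l: "-B \<le> f k w" for k using fB[of k w] abs_ge_minus_self[of "f k w"] by linarith
    have "g w \<le> B" using fB by (intro tendsto_upperbound[OF lim]) (auto simp: abs_le_iff intro!: always_eventually)
    moreover have "-B \<le> g w" using l by (intro tendsto_lowerbound[OF lim]) (auto intro!: always_eventually)
    ultimately show ?thesis by auto
  qed
  have fg: "f k w \<le> g w" for k w
    by (rule tendsto_lowerbound[OF lim]) (auto intro!: eventually_sequentiallyI[of k] inc)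
  have mono: "sexp P (f k) \<le> sexp P (f k')" if "k \<le> k'" for k k'
    by (rule sexp_mono[OF fm fB fm fB]) (use inc that in auto)
  have up: "sexp P (f k) \<le> sexp P g" for k
    by (rule sexp_mono[OF fm fB gm gB fg])
  show ?thesis
  proof (rule LIMSEQ_I)
    fix r :: real assume r: "r > 0"
    have "sexp P g - r/2 < sexp P g" using r by simp
    then obtain Q where Q: "Q \<in> P" "sexp P g - r/2 < integral\<^sup>L Q g"
      unfolding sexp_def[of P g] by (subst (asm) less_cSUP_iff[OF sleP sexp_bdd[OF gm gB]]) auto
    have "(\<lambda>k. integral\<^sup>L Q (f k)) \<longlonglongrightarrow> integral\<^sup>L Q g"
      by (rule prob_int_tendsto[OF sleQ(1)[OF Q(1)] measQ[OF Q(1) fm] measQ[OF Q(1) gm] fB lim])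
    then obtain K where K: "\<And>n. n \<ge> K \<Longrightarrow> norm (integral\<^sup>L Q (f n) - integral\<^sup>L Q g) < r/2"
      using r unfolding LIMSEQ_def dist_real_def by (metis half_gt_zero real_norm_def)
    show "\<exists>no. \<forall>n\<ge>no. norm (sexp P (f n) - sexp P g) < r"
    proof (intro exI allI impI)
      fix n assume n: "K \<le> n"
      have "integral\<^sup>L Q (f K) \<le> sexp P (f K)" by (rule sexp_upper[OF fm fB Q(1)])
      also have "\<dots> \<le> sexp P (f n)" using mono[OF n] .
      finally have c: "integral\<^sup>L Q (f K) \<le> sexp P (f n)" .
      have "\<bar>integral\<^sup>L Q (f K) - integral\<^sup>L Q g\<bar> < r/2" using K[of K] by simp
      from abs_less_iff[THEN iffD1, OF this]
      show "norm (sexp P (f n) - sexp P g) < r"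
        using Q(2) up[of n] c by simp
    qed
  qed
qed

text \<open>Extension from bounded Lipschitz to bounded continuous functions of lists.\<close>

lemma ext_sexp:
  assumes fc: "lcont m f" and fB: "\<And>y. length y = m \<Longrightarrow> \<bar>f y\<bar> \<le> B"
    and len: "length Zs = m" and Zm: "\<And>Z. Z \<in> set Zs \<Longrightarrow> Z \<in> borel_measurable M"
  shows "(\<lambda>k. sexp P (\<lambda>w. infconv m f k (rvec Zs w))) \<longlonglongrightarrow> sexp P (\<lambda>w. f (rvec Zs w))"
proof (rule sexp_incseq_tendsto)
  show "(\<lambda>w. infconv m f k (rvec Zs w)) \<in> borel_measurable M" for k
    by (rule lcont_measurable[OF bLip_lcont[OF infconv_bLip[OF fB]] len Zm])
  show "(\<lambda>w. f (rvec Zs w)) \<in> borel_measurable M"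
    by (rule lcont_measurable[OF fc len Zm])
  show "\<bar>infconv m f k (rvec Zs w)\<bar> \<le> B" for k w
    using infconv_abs[OF fB] len by simp
  show "infconv m f k (rvec Zs w) \<le> infconv m f k' (rvec Zs w)" if "k \<le> k'" for k k' w
    using infconv_mono[OF fB that] .
  show "(\<lambda>k. infconv m f k (rvec Zs w)) \<longlonglongrightarrow> f (rvec Zs w)" for w
    using infconv_tendsto[OF fB fc] len by simp
qed

end

lemma ext_int:
  assumes N: "prob_space N" and fc: "lcont m f" and fB: "\<And>y. length y = m \<Longrightarrow> \<bar>f y\<bar> \<le> B"
    and len: "length Zs = m" and Zm: "\<And>Z. Z \<in> set Zs \<Longrightarrow> Z \<in> borel_measurable N"
  shows "(\<lambda>k. \<integral>x. infconv m f k (rvec Zs x) \<partial>N) \<longlonglongrightarrow> (\<integral>x. f (rvec Zs x) \<partial>N)"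
proof (rule prob_int_tendsto[OF N])
  show "(\<lambda>w. infconv m f k (rvec Zs w)) \<in> borel_measurable N" for k
    by (rule lcont_measurable[OF bLip_lcont[OF infconv_bLip[OF fB]] len Zm])
  show "(\<lambda>w. f (rvec Zs w)) \<in> borel_measurable N"
    by (rule lcont_measurable[OF fc len Zm])
  show "\<bar>infconv m f k (rvec Zs w)\<bar> \<le> B" for k w
    using infconv_abs[OF fB] len by simp
  show "(\<lambda>k. infconv m f k (rvec Zs w)) \<longlonglongrightarrow> f (rvec Zs w)" for w
    using infconv_tendsto[OF fB fc] len by simp
qed

lemma SUP_incseq_tendsto:
  fixes a :: "nat \<Rightarrow> 'v \<Rightarrow> real"
  assumes C: "C \<noteq> {}"
    and inc: "\<And>k k' v. v \<in> C \<Longrightarrow> k \<le> k' \<Longrightarrow> a k v \<le> a k' v"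
    and lim: "\<And>v. v \<in> C \<Longrightarrow> (\<lambda>k. a k v) \<longlonglongrightarrow> b v"
    and B: "\<And>k v. v \<in> C \<Longrightarrow> \<bar>a k v\<bar> \<le> B"
  shows "(\<lambda>k. SUP v\<in>C. a k v) \<longlonglongrightarrow> (SUP v\<in>C. b v)"
proof -
  have bB: "\<bar>b v\<bar> \<le> B" if "v \<in> C" for v
  proof -
    have l: "-B \<le> a k v" for k using B[OF that, of k] abs_ge_minus_self[of "a k v"] by linarith
    have "b v \<le> B" using B[OF that] by (intro tendsto_upperbound[OF lim[OF that]]) (auto simp: abs_le_iff intro!: always_eventually)
    moreover have "-B \<le> b v" using l by (intro tendsto_lowerbound[OF lim[OF that]]) (auto intro!: always_eventually)
    ultimately show ?thesis by auto
  qed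
  have ab: "a k v \<le> b v" if "v \<in> C" for k v
    by (rule tendsto_lowerbound[OF lim[OF that]]) (auto intro!: eventually_sequentiallyI[of k] inc that)
  have bdda: "bdd_above ((\<lambda>v. a k v) ` C)" for k
    using B by (intro bdd_aboveI[of _ B]) (auto simp: abs_le_iff)
  have bddb: "bdd_above (b ` C)"
    using bB by (intro bdd_aboveI[of _ B]) (auto simp: abs_le_iff)
  have up: "(SUP v\<in>C. a k v) \<le> (SUP v\<in>C. b v)" for k
    by (rule cSUP_mono[OF C bddb]) (use ab in blast)
  have mono: "(SUP v\<in>C. a k v) \<le> (SUP v\<in>C. a k' v)" if "k \<le> k'" for k k'
    by (rule cSUP_mono[OF C bdda]) (use inc that in blast)
  show ?thesis
  proof (rule LIMSEQ_I)
    fix r :: real assume r: "r > 0"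
    have "(SUP v\<in>C. b v) - r/2 < (SUP v\<in>C. b v)" using r by simp
    then obtain v where v: "v \<in> C" "(SUP v\<in>C. b v) - r/2 < b v"
      by (subst (asm) less_cSUP_iff[OF C bddb]) auto
    obtain K where K: "\<And>n. n \<ge> K \<Longrightarrow> norm (a n v - b v) < r/2"
      using lim[OF v(1)] r unfolding LIMSEQ_def dist_real_def by (metis half_gt_zero real_norm_def)
    show "\<exists>no. \<forall>n\<ge>no. norm ((SUP v\<in>C. a n v) - (SUP v\<in>C. b v)) < r"
    proof (intro exI allI impI)
      fix n assume n: "K \<le> n"
      have "a K v \<le> (SUP v\<in>C. a K v)" by (rule cSUP_upper[OF v(1) bdda])
      also have "\<dots> \<le> (SUP v\<in>C. a n v)" using mono[OF n] .
      finally have c: "a K v \<le> (SUP v\<in>C. a n v)" .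
      have "\<bar>a K v - b v\<bar> < r/2" using K[of K] by simp
      from abs_less_iff[THEN iffD1, OF this]
      show "norm ((SUP v\<in>C. a n v) - (SUP v\<in>C. b v)) < r"
        using v(2) up[of n] c by simp
    qed
  qed
qed


lemma abs_SUP_le:
  fixes f :: "'a \<Rightarrow> real"
  assumes "C \<noteq> {}" "\<And>c. c \<in> C \<Longrightarrow> \<bar>f c\<bar> \<le> B"
  shows "\<bar>SUP c\<in>C. f c\<bar> \<le> B"
proof -
  have bdd: "bdd_above (f ` C)" using assms(2) by (intro bdd_aboveI[of _ B]) (auto simp: abs_le_iff)
  obtain c where c: "c \<in> C" using assms(1) by auto
  have "(SUP c\<in>C. f c) \<le> B" using assms by (intro cSUP_least) (auto simp: abs_le_iff)
  moreover have "f c \<le> (SUP c\<in>C. f c)" by (rule cSUP_upper[OF c bdd])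
  ultimately show ?thesis using assms(2)[OF c] by (auto simp: abs_le_iff)
qed

lemma SUP_diff_le:
  fixes f g :: "'a \<Rightarrow> real"
  assumes C: "C \<noteq> {}" and fB: "\<And>c. c \<in> C \<Longrightarrow> \<bar>f c\<bar> \<le> B" and gB: "\<And>c. c \<in> C \<Longrightarrow> \<bar>g c\<bar> \<le> B'"
    and d: "\<And>c. c \<in> C \<Longrightarrow> \<bar>f c - g c\<bar> \<le> D"
  shows "\<bar>(SUP c\<in>C. f c) - (SUP c\<in>C. g c)\<bar> \<le> D"
proof -
  have bf: "bdd_above (f ` C)" using fB by (intro bdd_aboveI[of _ B]) (auto simp: abs_le_iff)
  have bg: "bdd_above (g ` C)" using gB by (intro bdd_aboveI[of _ B']) (auto simp: abs_le_iff)
  have "(SUP c\<in>C. f c) \<le> (SUP c\<in>C. g c) + D"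
  proof (rule cSUP_least[OF C])
    fix c assume c: "c \<in> C"
    have "f c \<le> g c + D" using d[OF c] by (simp add: abs_le_iff)
    also have "g c \<le> (SUP c\<in>C. g c)" by (rule cSUP_upper[OF c bg])
    finally show "f c \<le> (SUP c\<in>C. g c) + D" by simp
  qed
  moreover have "(SUP c\<in>C. g c) \<le> (SUP c\<in>C. f c) + D"
  proof (rule cSUP_least[OF C])
    fix c assume c: "c \<in> C"
    have "g c \<le> f c + D" using d[OF c] by (simp add: abs_le_iff)
    also have "f c \<le> (SUP c\<in>C. f c)" by (rule cSUP_upper[OF c bf])
    finally show "g c \<le> (SUP c\<in>C. f c) + D" by simp
  qed
  ultimately show ?thesis by (simp add: abs_le_iff)
qed

lemma SUP_pairs:
  fixes g :: "'c \<Rightarrow> real"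
  assumes C: "C \<noteq> {}" and I: "I \<noteq> {}"
    and gB: "\<And>v u. v \<in> C \<Longrightarrow> u \<in> I \<Longrightarrow> \<bar>g (F v u)\<bar> \<le> B"
  shows "(SUP s\<in>{F v u | v u. v \<in> C \<and> u \<in> I}. g s) = (SUP v\<in>C. SUP u\<in>I. g (F v u))"
proof -
  let ?S = "{F v u | v u. v \<in> C \<and> u \<in> I}"
  have S: "?S \<noteq> {}" using C I by auto
  have bS: "bdd_above (g ` ?S)" using gB by (intro bdd_aboveI[of _ B]) (auto simp: abs_le_iff)
  have bI: "bdd_above ((\<lambda>u. g (F v u)) ` I)" if "v \<in> C" for v
    using gB that by (intro bdd_aboveI[of _ B]) (auto simp: abs_le_iff)
  have inner: "\<bar>SUP u\<in>I. g (F v u)\<bar> \<le> B" if "v \<in> C" for v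
    by (rule abs_SUP_le[OF I]) (use gB that in auto)
  have bC: "bdd_above ((\<lambda>v. SUP u\<in>I. g (F v u)) ` C)"
    using inner by (intro bdd_aboveI[of _ B]) (auto simp: abs_le_iff)
  show ?thesis
  proof (rule antisym)
    show "(SUP s\<in>?S. g s) \<le> (SUP v\<in>C. SUP u\<in>I. g (F v u))"
    proof (rule cSUP_least[OF S])
      fix s assume "s \<in> ?S"
      then obtain v u where vu: "v \<in> C" "u \<in> I" "s = F v u" by auto
      have "g (F v u) \<le> (SUP u\<in>I. g (F v u))" by (rule cSUP_upper[OF vu(2) bI[OF vu(1)]])
      also have "\<dots> \<le> (SUP v\<in>C. SUP u\<in>I. g (F v u))" by (rule cSUP_upper[OF vu(1) bC])
      finally show "g s \<le> (SUP v\<in>C. SUP u\<in>I. g (F v u))" using vu by simp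
    qed
    show "(SUP v\<in>C. SUP u\<in>I. g (F v u)) \<le> (SUP s\<in>?S. g s)"
    proof (rule cSUP_least[OF C], rule cSUP_least[OF I])
      fix v u assume "v \<in> C" "u \<in> I"
      then have "F v u \<in> ?S" by auto
      then show "g (F v u) \<le> (SUP s\<in>?S. g s)" by (rule cSUP_upper[OF _ bS])
    qed
  qed
qed

lemma bLip1_lLip1: "bLip1 \<phi> \<Longrightarrow> lLip1 \<phi>"
  unfolding bLip1_def lLip1_def
proof (elim conjE exE)
  fix B L assume L: "\<forall>x y. \<bar>\<phi> x - \<phi> y\<bar> \<le> L * \<bar>x - y\<bar>"
  show "\<exists>C k. \<forall>x y. \<bar>\<phi> x - \<phi> y\<bar> \<le> C * (1 + \<bar>x\<bar> ^ k + \<bar>y\<bar> ^ k) * \<bar>x - y\<bar>"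
  proof (intro exI allI)
    fix x y
    have "\<bar>\<phi> x - \<phi> y\<bar> \<le> L * \<bar>x - y\<bar>" using L by blast
    also have "\<dots> \<le> \<bar>L\<bar> * 3 * \<bar>x - y\<bar>"
      by (intro mult_right_mono) auto
    finally show "\<bar>\<phi> x - \<phi> y\<bar> \<le> \<bar>L\<bar> * (1 + \<bar>x\<bar> ^ 0 + \<bar>y\<bar> ^ 0) * \<bar>x - y\<bar>" by simp
  qed
qed

lemma list_dist_1: "length x = 1 \<Longrightarrow> length y = 1 \<Longrightarrow> list_dist 1 x y = \<bar>x!0 - y!0\<bar>"
  by (simp add: list_dist_def)

lemma bLip_single: "bLip 1 g \<Longrightarrow> bLip1 (\<lambda>x. g [x])"
  unfolding bLip_def bLip1_def
proof (elim conjE exE)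
  fix B L assume B: "\<forall>x. length x = 1 \<longrightarrow> \<bar>g x\<bar> \<le> B"
    and L: "\<forall>x y. length x = 1 \<longrightarrow> length y = 1 \<longrightarrow> \<bar>g x - g y\<bar> \<le> L * list_dist 1 x y"
  have "\<forall>x. \<bar>g [x]\<bar> \<le> B" using B by simp
  moreover have "\<forall>x y. \<bar>g [x] - g [y]\<bar> \<le> L * \<bar>x - y\<bar>"
    using L list_dist_single by (metis length_Cons list.size(3) One_nat_def)
  ultimately show "(\<exists>B. \<forall>x. \<bar>g [x]\<bar> \<le> B) \<and> (\<exists>L. \<forall>x y. \<bar>g [x] - g [y]\<bar> \<le> L * \<bar>x - y\<bar>)"
    by blast
qed

lemma bLip1_list: "bLip1 \<phi> \<Longrightarrow> bLip 1 (\<lambda>l. \<phi> (l!0))"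
  unfolding bLip_def bLip1_def
proof (elim conjE exE)
  fix B L assume B: "\<forall>x. \<bar>\<phi> x\<bar> \<le> B" and L: "\<forall>x y. \<bar>\<phi> x - \<phi> y\<bar> \<le> L * \<bar>x - y\<bar>"
  show "(\<exists>B. \<forall>x. length x = 1 \<longrightarrow> \<bar>\<phi> (x ! 0)\<bar> \<le> B) \<and>
    (\<exists>L. \<forall>x y. length x = 1 \<longrightarrow> length y = 1 \<longrightarrow> \<bar>\<phi> (x ! 0) - \<phi> (y ! 0)\<bar> \<le> L * list_dist 1 x y)"
  proof (intro conjI exI allI impI)
    fix x :: "real list" show "\<bar>\<phi> (x ! 0)\<bar> \<le> B" using B by blast
  next
    fix x y :: "real list" assume "length x = 1" "length y = 1"
    then show "\<bar>\<phi> (x ! 0) - \<phi> (y ! 0)\<bar> \<le> L * list_dist 1 x y"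
      using L[rule_format, of "x!0" "y!0"] list_dist_1[of x y] by simp
  qed
qed

lemma list_dist_snoc:
  assumes "length v = m" shows "list_dist (m + 1) (v @ [x]) (v @ [y]) = \<bar>x - y\<bar>"
proof -
  have "(\<Sum>i<m+1. ((v @ [x])!i - (v @ [y])!i)^2) = (\<Sum>i\<in>{m}. ((v @ [x])!i - (v @ [y])!i)^2)"
    by (rule sum.mono_neutral_right) (auto simp: nth_append assms)
  then show ?thesis using assms by (simp add: list_dist_def nth_append)
qed

lemma const_rvec: "rvec (map (\<lambda>c _. c) v @ Ys) w = v @ rvec Ys w"
  by (simp add: rvec_def comp_def)

section \<open>Maximal representation\<close>

definition maxrep :: "'w measure set \<Rightarrow> ('w \<Rightarrow> real) list \<Rightarrow> real list set \<Rightarrow> bool" where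
  "maxrep P Vs C \<longleftrightarrow> (\<forall>g. bLip (length Vs) g \<longrightarrow> sexp P (\<lambda>w. g (rvec Vs w)) = (SUP v\<in>C. g v))"

lemma bLip_bound: "bLip m g \<Longrightarrow> \<exists>B. \<forall>x. length x = m \<longrightarrow> \<bar>g x\<bar> \<le> B"
  unfolding bLip_def by blast

lemma maxrep_single:
  assumes "maximal_dist P V a b"
  shows "maxrep P [V] ((\<lambda>v. [v]) ` {a..b})"
  unfolding maxrep_def
proof (intro allI impI)
  fix g :: "real list \<Rightarrow> real" assume g: "bLip (length [V]) g"
  then have "lLip1 (\<lambda>x. g [x])" by (intro bLip1_lLip1 bLip_single) simp
  then have "sexp P (\<lambda>w. g [V w]) = (SUP v\<in>{a..b}. g [v])"
    using assms unfolding maximal_dist_def by blast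
  then show "sexp P (\<lambda>w. g (rvec [V] w)) = (SUP v\<in>(\<lambda>v. [v]) ` {a..b}. g v)"
    by (simp add: rvec_def image_comp comp_def)
qed

context
  fixes M :: "'w measure" and P :: "'w measure set"
  assumes sle: "sle_space M P"
begin

lemma meas_const_app:
  assumes f: "lcont N f" and len: "length v + length Ys = N"
    and Ym: "\<And>Y. Y \<in> set Ys \<Longrightarrow> Y \<in> borel_measurable M"
  shows "(\<lambda>w. f (v @ rvec Ys w)) \<in> borel_measurable M"
proof -
  have zm: "\<And>Z. Z \<in> set (map (\<lambda>c _. c) v @ Ys) \<Longrightarrow> Z \<in> borel_measurable M" using Ym by auto
  have "(\<lambda>w. f (rvec (map (\<lambda>c _. c) v @ Ys) w)) \<in> borel_measurable M"
    by (rule lcont_measurable[OF f _ zm]) (use len in auto)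
  then show ?thesis by (simp add: const_rvec)
qed

lemma maxrep_step:
  assumes mr: "maxrep P Vs C" and C: "C \<noteq> {}" "C \<subseteq> {v. length v = length Vs}"
    and md: "maximal_dist P U a b" and ab: "a \<le> b"
    and ind: "sl_indep P Vs [U]"
    and Vm: "\<And>Y. Y \<in> set Vs \<Longrightarrow> Y \<in> borel_measurable M" and Um: "U \<in> borel_measurable M"
  shows "maxrep P (Vs @ [U]) {v @ [u] | v u. v \<in> C \<and> u \<in> {a..b}}"
  unfolding maxrep_def
proof (intro allI impI)
  fix g assume g: "bLip (length (Vs @ [U])) g"
  define m where "m = length Vs"
  from g have "bLip (m+1) g" by (simp add: m_def)
  then obtain B L where B: "\<And>x. length x = m + 1 \<Longrightarrow> \<bar>g x\<bar> \<le> B"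
    and L: "\<And>x y. length x = m + 1 \<Longrightarrow> length y = m + 1 \<Longrightarrow> \<bar>g x - g y\<bar> \<le> L * list_dist (m+1) x y"
    unfolding bLip_def by blast
  define h where "h v = (SUP u\<in>{a..b}. g (v @ [u]))" for v
  have I: "{a..b} \<noteq> {}" using ab by auto
  have inner: "sexp P (\<lambda>w'. g (v @ [U w'])) = h v" if v: "length v = m" for v
  proof -
    have b1: "\<forall>x. \<bar>g (v @ [x])\<bar> \<le> B" using B v by simp
    have b2: "\<forall>x y. \<bar>g (v @ [x]) - g (v @ [y])\<bar> \<le> L * \<bar>x - y\<bar>"
    proof (intro allI)
      fix x y show "\<bar>g (v @ [x]) - g (v @ [y])\<bar> \<le> L * \<bar>x - y\<bar>"
        using L[of "v @ [x]" "v @ [y]"] list_dist_snoc[OF v, of x y] v by simp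
    qed
    have "bLip1 (\<lambda>x. g (v @ [x]))"
      unfolding bLip1_def using b1 b2 by blast
    then show ?thesis using md unfolding maximal_dist_def h_def by (blast intro: bLip1_lLip1)
  qed
  have hB: "\<bar>h v\<bar> \<le> B" if "length v = m" for v
    unfolding h_def by (rule abs_SUP_le[OF I]) (use B that in auto)
  have hL: "\<bar>h v - h v'\<bar> \<le> L * list_dist m v v'" if "length v = m" "length v' = m" for v v'
  proof -
    have b1: "\<bar>g (u @ [x])\<bar> \<le> B" if "length u = m" for u x
      using B that by simp
    have d: "\<bar>g (v @ [x]) - g (v' @ [x])\<bar> \<le> L * list_dist m v v'" for x
      using L[of "v @ [x]" "v' @ [x]"] list_dist_append[OF that, of 1 "[x]"] that by simp
    show ?thesis unfolding h_def
      by (rule SUP_diff_le[OF I b1[OF that(1)] b1[OF that(2)] d])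
  qed
  have hbl: "bLip m h" unfolding bLip_def using hB hL by blast
  have "sexp P (\<lambda>w. g (rvec (Vs @ [U]) w)) = sexp P (\<lambda>w. g (rvec Vs w @ rvec [U] w))"
    by (simp add: rvec_append)
  also have "\<dots> = sexp P (\<lambda>w. sexp P (\<lambda>w'. g (rvec Vs w @ rvec [U] w')))"
    using ind g unfolding sl_indep_def by simp
  also have "\<dots> = sexp P (\<lambda>w. h (rvec Vs w))"
    using inner by (simp add: rvec_def m_def)
  also have "\<dots> = (SUP v\<in>C. h v)"
    using mr hbl unfolding maxrep_def m_def by blast
  also have "\<dots> = (SUP s\<in>{v @ [u] | v u. v \<in> C \<and> u \<in> {a..b}}. g s)"
    unfolding h_def
    by (rule SUP_pairs[where B=B and F="\<lambda>v u. v @ [u]", OF C(1) I, symmetric]) (use B C(2) m_def in force)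
  finally show "sexp P (\<lambda>w. g (rvec (Vs @ [U]) w)) = (SUP s\<in>{v @ [u] | v u. v \<in> C \<and> u \<in> {a..b}}. g s)" .
qed

lemma rep_indep:
  assumes mr: "maxrep P Vs C" and C: "C \<noteq> {}" "C \<subseteq> {v. length v = length Vs}"
    and ind: "sl_indep P Vs Ys"
    and Vm: "\<And>Y. Y \<in> set Vs \<Longrightarrow> Y \<in> borel_measurable M"
    and Ym: "\<And>Y. Y \<in> set Ys \<Longrightarrow> Y \<in> borel_measurable M"
    and fc: "lcont (length Vs + length Ys) f"
    and fB: "\<And>y. length y = length Vs + length Ys \<Longrightarrow> \<bar>f y\<bar> \<le> B"
  shows "sexp P (\<lambda>w. f (rvec Vs w @ rvec Ys w)) = (SUP v\<in>C. sexp P (\<lambda>w. f (v @ rvec Ys w)))"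
proof -
  define m where "m = length Vs"
  define n where "n = length Ys"
  have blip: "sexp P (\<lambda>w. \<psi> (rvec Vs w @ rvec Ys w)) = (SUP v\<in>C. sexp P (\<lambda>w. \<psi> (v @ rvec Ys w)))"
    if psi: "bLip (m + n) \<psi>" for \<psi>
  proof -
    from psi obtain B L where B: "\<And>x. length x = m + n \<Longrightarrow> \<bar>\<psi> x\<bar> \<le> B"
      and L: "\<And>x y. length x = m + n \<Longrightarrow> length y = m + n \<Longrightarrow> \<bar>\<psi> x - \<psi> y\<bar> \<le> L * list_dist (m+n) x y"
      unfolding bLip_def by blast
    define h where "h v = sexp P (\<lambda>w'. \<psi> (v @ rvec Ys w'))" for v
    have pm: "(\<lambda>w. \<psi> (v @ rvec Ys w)) \<in> borel_measurable M" if "length v = m" for v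
      by (rule meas_const_app[OF bLip_lcont[OF psi]]) (use that Ym n_def in auto)
    have hB: "\<bar>h v\<bar> \<le> B" if "length v = m" for v
      unfolding h_def
      by (rule sexp_abs[OF sle pm[OF that]]) (use B that n_def in auto)
    have hL: "\<bar>h v - h v'\<bar> \<le> L * list_dist m v v'" if "length v = m" "length v' = m" for v v'
    proof -
      have b1: "\<bar>\<psi> (u @ rvec Ys w)\<bar> \<le> B" if "length u = m" for u w
        using B that n_def by simp
      have d: "\<bar>\<psi> (v @ rvec Ys w) - \<psi> (v' @ rvec Ys w)\<bar> \<le> L * list_dist m v v'" for w
        using L[of "v @ rvec Ys w" "v' @ rvec Ys w"] list_dist_append[OF that, of n "rvec Ys w"] that n_def
        by simp
      show ?thesis unfolding h_def
        by (rule sexp_lip[OF sle pm[OF that(1)] b1[OF that(1)] pm[OF that(2)] b1[OF that(2)] d])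
    qed
    have hbl: "bLip m h" unfolding bLip_def using hB hL by blast
    have "sexp P (\<lambda>w. \<psi> (rvec Vs w @ rvec Ys w)) = sexp P (\<lambda>w. sexp P (\<lambda>w'. \<psi> (rvec Vs w @ rvec Ys w')))"
      using ind psi unfolding sl_indep_def m_def n_def by simp
    also have "\<dots> = sexp P (\<lambda>w. h (rvec Vs w))" by (simp add: h_def)
    also have "\<dots> = (SUP v\<in>C. h v)"
      using mr hbl unfolding maxrep_def m_def by blast
    finally show ?thesis by (simp add: h_def)
  qed
  define fk where "fk k = infconv (m + n) f k" for k
  have fB': "\<And>y. length y = m + n \<Longrightarrow> \<bar>f y\<bar> \<le> B" using fB m_def n_def by simp
  have fc': "lcont (m + n) f" using fc m_def n_def by simp
  have allm: "\<And>Y. Y \<in> set (Vs @ Ys) \<Longrightarrow> Y \<in> borel_measurable M" using Vm Ym by auto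
  have lim1: "(\<lambda>k. sexp P (\<lambda>w. fk k (rvec Vs w @ rvec Ys w))) \<longlonglongrightarrow> sexp P (\<lambda>w. f (rvec Vs w @ rvec Ys w))"
    using ext_sexp[OF sle fc' fB', of "Vs @ Ys"] allm m_def n_def by (simp add: rvec_append fk_def)
  have eq: "sexp P (\<lambda>w. fk k (rvec Vs w @ rvec Ys w)) = (SUP v\<in>C. sexp P (\<lambda>w. fk k (v @ rvec Ys w)))" for k
    unfolding fk_def by (rule blip[OF infconv_bLip[of "m+n" f B, OF fB']])
  have lim2: "(\<lambda>k. SUP v\<in>C. sexp P (\<lambda>w. fk k (v @ rvec Ys w))) \<longlonglongrightarrow> (SUP v\<in>C. sexp P (\<lambda>w. f (v @ rvec Ys w)))"
  proof (rule SUP_incseq_tendsto[OF C(1)])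
    fix v assume v: "v \<in> C"
    then have lv: "length v = m" using C(2) m_def by auto
    have mk: "(\<lambda>w. fk k (v @ rvec Ys w)) \<in> borel_measurable M" for k
      unfolding fk_def
      by (rule meas_const_app[OF bLip_lcont[OF infconv_bLip[of "m+n" f B, OF fB']]]) (use lv Ym n_def in auto)
    have bk: "\<bar>fk k (v @ rvec Ys w)\<bar> \<le> B" for k w
    proof -
      have "length (v @ rvec Ys w) = m + n" using lv n_def by simp
      then show ?thesis unfolding fk_def using infconv_abs[of "m+n" f B, OF fB'] by simp
    qed
    show "\<bar>sexp P (\<lambda>w. fk k (v @ rvec Ys w))\<bar> \<le> B" for k
      by (rule sexp_abs[OF sle mk bk])
    show "sexp P (\<lambda>w. fk k (v @ rvec Ys w)) \<le> sexp P (\<lambda>w. fk k' (v @ rvec Ys w))" if "k \<le> k'" for k k'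
      by (rule sexp_mono[OF sle mk bk mk bk]) (use infconv_mono[of "m+n" f B, OF fB' that] fk_def in auto)
    show "(\<lambda>k. sexp P (\<lambda>w. fk k (v @ rvec Ys w))) \<longlonglongrightarrow> sexp P (\<lambda>w. f (v @ rvec Ys w))"
    proof -
      have zm: "\<And>Z. Z \<in> set (map (\<lambda>c _. c) v @ Ys) \<Longrightarrow> Z \<in> borel_measurable M" using Ym by auto
      have "length (map (\<lambda>c _. c) v @ Ys) = m + n" using lv n_def by simp
      from ext_sexp[OF sle fc' fB' this zm] show ?thesis by (simp add: const_rvec fk_def)
    qed
  qed
  show ?thesis
    using LIMSEQ_unique[OF lim1] lim2 eq by simp
qed

lemma rep_classical:
  assumes Zm: "\<And>Z. Z \<in> set Zs \<Longrightarrow> Z \<in> borel_measurable M" and lZ: "length Zs = n"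
    and N: "prob_space N" and Ym: "\<And>Y. Y \<in> set Ys \<Longrightarrow> Y \<in> borel_measurable N" and lY: "length Ys = n"
    and hyp: "\<And>g. bLip n g \<Longrightarrow> sexp P (\<lambda>w. g (rvec Zs w)) = (\<integral>x. g (rvec Ys x) \<partial>N)"
    and fc: "lcont n f" and fB: "\<And>y. length y = n \<Longrightarrow> \<bar>f y\<bar> \<le> B"
  shows "sexp P (\<lambda>w. f (rvec Zs w)) = (\<integral>x. f (rvec Ys x) \<partial>N)"
proof -
  have l1: "(\<lambda>k. sexp P (\<lambda>w. infconv n f k (rvec Zs w))) \<longlonglongrightarrow> sexp P (\<lambda>w. f (rvec Zs w))"
    by (rule ext_sexp[OF sle fc fB lZ Zm])
  have l2: "(\<lambda>k. \<integral>x. infconv n f k (rvec Ys x) \<partial>N) \<longlonglongrightarrow> (\<integral>x. f (rvec Ys x) \<partial>N)"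
    by (rule ext_int[OF N fc fB lY Ym])
  have "sexp P (\<lambda>w. infconv n f k (rvec Zs w)) = (\<integral>x. infconv n f k (rvec Ys x) \<partial>N)" for k
    by (rule hyp[OF infconv_bLip[OF fB]])
  with l1 l2 show ?thesis using LIMSEQ_unique by simp
qed

end


lemma isCont_of_cont: "continuous_on UNIV \<phi> \<Longrightarrow> isCont \<phi> x"
  using continuous_on_eq_continuous_at open_UNIV by blast

lemma lcont_prod2:
  fixes \<phi> :: "real \<Rightarrow> real"
  assumes "continuous_on UNIV \<phi>"
  shows "lcont 2 (\<lambda>l. \<phi> (l!0 * l!1))"
proof (rule lcontI)
  fix x :: "real list" and ys :: "nat \<Rightarrow> real list" assume c: "\<And>i. i < 2 \<Longrightarrow> (\<lambda>k. ys k ! i) \<longlonglongrightarrow> x ! i"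
  have "(\<lambda>k. ys k ! 0 * ys k ! 1) \<longlonglongrightarrow> x!0 * x!1"
    by (intro tendsto_mult c) auto
  from isCont_tendsto_compose[OF isCont_of_cont[OF assms] this]
  show "(\<lambda>k. \<phi> (ys k ! 0 * ys k ! 1)) \<longlonglongrightarrow> \<phi> (x ! 0 * x ! 1)" .
qed

lemma lcont_scale1:
  fixes \<phi> :: "real \<Rightarrow> real"
  assumes "continuous_on UNIV \<phi>"
  shows "lcont 1 (\<lambda>l. \<phi> (c * l!0))"
proof (rule lcontI)
  fix x :: "real list" and ys :: "nat \<Rightarrow> real list" assume c: "\<And>i. i < 1 \<Longrightarrow> (\<lambda>k. ys k ! i) \<longlonglongrightarrow> x ! i"
  have "(\<lambda>k. c * ys k ! 0) \<longlonglongrightarrow> c * x!0"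
    by (intro tendsto_mult c tendsto_const) auto
  from isCont_tendsto_compose[OF isCont_of_cont[OF assms] this]
  show "(\<lambda>k. \<phi> (c * ys k ! 0)) \<longlonglongrightarrow> \<phi> (c * x ! 0)" .
qed

lemma lcont_sum2:
  fixes \<phi> :: "real \<Rightarrow> real"
  assumes "continuous_on UNIV \<phi>"
  shows "lcont (n + n) (\<lambda>l. \<phi> ((\<Sum>i<n. l!i * l!(n+i)) / sqrt (real n)))"
proof (rule lcontI)
  fix x :: "real list" and ys :: "nat \<Rightarrow> real list" assume c: "\<And>i. i < n + n \<Longrightarrow> (\<lambda>k. ys k ! i) \<longlonglongrightarrow> x ! i"
  have "(\<lambda>k. (\<Sum>i<n. ys k ! i * ys k ! (n+i)) / sqrt (real n)) \<longlonglongrightarrow> (\<Sum>i<n. x!i * x!(n+i)) / sqrt (real n)"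
    by (cases "n = 0") (auto intro!: tendsto_intros c)
  from isCont_tendsto_compose[OF isCont_of_cont[OF assms] this]
  show "(\<lambda>k. \<phi> ((\<Sum>i<n. ys k ! i * ys k ! (n+i)) / sqrt (real n))) \<longlonglongrightarrow> \<phi> ((\<Sum>i<n. x!i * x!(n+i)) / sqrt (real n))" .
qed

lemma lcont_sum1:
  fixes \<phi> :: "real \<Rightarrow> real"
  assumes "continuous_on UNIV \<phi>"
  shows "lcont n (\<lambda>l. \<phi> ((\<Sum>i<n. v!i * l!i) / sqrt (real n)))"
proof (rule lcontI)
  fix x :: "real list" and ys :: "nat \<Rightarrow> real list" assume c: "\<And>i. i < n \<Longrightarrow> (\<lambda>k. ys k ! i) \<longlonglongrightarrow> x ! i"
  have "(\<lambda>k. (\<Sum>i<n. v!i * ys k ! i) / sqrt (real n)) \<longlonglongrightarrow> (\<Sum>i<n. v!i * x!i) / sqrt (real n)"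
    by (cases "n = 0") (auto intro!: tendsto_intros c)
  from isCont_tendsto_compose[OF isCont_of_cont[OF assms] this]
  show "(\<lambda>k. \<phi> ((\<Sum>i<n. v!i * ys k ! i) / sqrt (real n))) \<longlonglongrightarrow> \<phi> ((\<Sum>i<n. v!i * x!i) / sqrt (real n))" .
qed

context
  fixes M :: "'w measure" and P :: "'w measure set"
  assumes sle: "sle_space M P"
begin

lemma rep_cdist:
  assumes cd: "classical_dist P \<epsilon> \<nu>" and em: "\<epsilon> \<in> borel_measurable M"
    and fc: "continuous_on UNIV \<phi>" and fB: "\<And>x. \<bar>\<phi> x\<bar> \<le> B"
  shows "sexp P (\<lambda>w. \<phi> (c * \<epsilon> w)) = (\<integral>x. \<phi> (c * x) \<partial>\<nu>)"
proof -
  have N: "prob_space \<nu>" and sN: "sets \<nu> = sets borel" using cd unfolding classical_dist_def by auto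
  have idm: "(\<lambda>x::real. x) \<in> borel_measurable \<nu>"
    unfolding measurable_cong_sets[OF sN refl] by simp
  have "sexp P (\<lambda>w. (\<lambda>l. \<phi> (c * l!0)) (rvec [\<epsilon>] w)) = (\<integral>x. (\<lambda>l. \<phi> (c * l!0)) (rvec [\<lambda>x. x] x) \<partial>\<nu>)"
  proof (rule rep_classical[OF sle _ _ N _ _ _ lcont_scale1[OF fc]])
    show "\<And>Z. Z \<in> set [\<epsilon>] \<Longrightarrow> Z \<in> borel_measurable M" using em by auto
    show "\<And>Y. Y \<in> set [\<lambda>x. x] \<Longrightarrow> Y \<in> borel_measurable \<nu>" using idm by auto
    show "\<And>y. length y = 1 \<Longrightarrow> \<bar>\<phi> (c * y ! 0)\<bar> \<le> B" using fB by auto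
    fix g :: "real list \<Rightarrow> real" assume "bLip 1 g"
    then have "bLip1 (\<lambda>x. g [x])" by (rule bLip_single)
    then have "sexp P (\<lambda>w. (\<lambda>x. g [x]) (\<epsilon> w)) = integral\<^sup>L \<nu> (\<lambda>x. g [x])"
      using cd unfolding classical_dist_def by blast
    then show "sexp P (\<lambda>w. g (rvec [\<epsilon>] w)) = (\<integral>x. g (rvec [\<lambda>x. x] x) \<partial>\<nu>)"
      by (simp add: rvec_def)
  qed auto
  then show ?thesis by (simp add: rvec_def)
qed

lemma rep1:
  assumes md: "maximal_dist P V a b" and ab: "a \<le> b"
    and cd: "classical_dist P \<epsilon> \<nu>" and ind: "sl_indep P [V] [\<epsilon>]"
    and Vm: "V \<in> borel_measurable M" and em: "\<epsilon> \<in> borel_measurable M"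
    and fc: "continuous_on UNIV \<phi>" and fB: "\<And>x. \<bar>\<phi> x\<bar> \<le> B"
  shows "sexp P (\<lambda>w. \<phi> (V w * \<epsilon> w)) = (SUP v\<in>{a..b}. \<integral>x. \<phi> (v * x) \<partial>\<nu>)"
proof -
  have "sexp P (\<lambda>w. (\<lambda>l. \<phi> (l!0 * l!1)) (rvec [V] w @ rvec [\<epsilon>] w)) =
        (SUP v\<in>(\<lambda>v. [v]) ` {a..b}. sexp P (\<lambda>w. (\<lambda>l. \<phi> (l!0 * l!1)) (v @ rvec [\<epsilon>] w)))"
    by (rule rep_indep[OF sle maxrep_single[OF md] _ _ ind, where B=B])
       (use ab Vm em fB lcont_prod2[OF fc] in \<open>auto simp: numeral_2_eq_2\<close>)
  also have "\<dots> = (SUP v\<in>{a..b}. sexp P (\<lambda>w. \<phi> (v * \<epsilon> w)))"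
    by (simp add: image_comp comp_def rvec_def)
  also have "\<dots> = (SUP v\<in>{a..b}. \<integral>x. \<phi> (v * x) \<partial>\<nu>)"
    using rep_cdist[OF cd em fc fB] by simp
  finally show ?thesis by (simp add: rvec_def)
qed

lemma rep_sum:
  assumes mr: "maxrep P Vs C" and C: "C \<noteq> {}" "C \<subseteq> {v. length v = n}"
    and lV: "length Vs = n" and lY: "length Ys = n"
    and ind: "sl_indep P Vs Ys" and ci: "classical_indep P Ys \<mu>"
    and mu: "\<And>j. prob_space (\<mu> j)" "\<And>j. sets (\<mu> j) = sets borel"
    and Vm: "\<And>Y. Y \<in> set Vs \<Longrightarrow> Y \<in> borel_measurable M"
    and Ym: "\<And>Y. Y \<in> set Ys \<Longrightarrow> Y \<in> borel_measurable M"
    and fc: "continuous_on UNIV \<phi>" and fB: "\<And>x. \<bar>\<phi> x\<bar> \<le> B"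
  shows "sexp P (\<lambda>w. \<phi> ((\<Sum>i<n. (Vs!i) w * (Ys!i) w) / sqrt (real n))) =
         (SUP v\<in>C. \<integral>x. \<phi> ((\<Sum>i<n. v!i * x i) / sqrt (real n)) \<partial>(PiM {..<n} \<mu>))"
proof -
  let ?f = "\<lambda>l. \<phi> ((\<Sum>i<n. l!i * l!(n+i)) / sqrt (real n))"
  have "sexp P (\<lambda>w. ?f (rvec Vs w @ rvec Ys w)) = (SUP v\<in>C. sexp P (\<lambda>w. ?f (v @ rvec Ys w)))"
    by (rule rep_indep[OF sle mr C(1) _ ind Vm Ym, where B=B])
       (use C lV lY fB lcont_sum2[OF fc, of n] in auto)
  moreover have "?f (rvec Vs w @ rvec Ys w) = \<phi> ((\<Sum>i<n. (Vs!i) w * (Ys!i) w) / sqrt (real n))" for w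
    using lV lY by (simp add: nth_append)
  moreover have "sexp P (\<lambda>w. ?f (v @ rvec Ys w)) = (\<integral>x. \<phi> ((\<Sum>i<n. v!i * x i) / sqrt (real n)) \<partial>(PiM {..<n} \<mu>))"
    if v: "v \<in> C" for v
  proof -
    have lv: "length v = n" using v C by auto
    let ?g = "\<lambda>l. \<phi> ((\<Sum>i<n. v!i * l!i) / sqrt (real n))"
    have eqf: "?f (v @ rvec Ys w) = ?g (rvec Ys w)" for w
      using lv lY by (simp add: nth_append)
    have N: "prob_space (PiM {..<n} \<mu>)" by (rule prob_space_PiM) (use mu in auto)
    have cm: "(\<lambda>x. x i) \<in> borel_measurable (PiM {..<n} \<mu>)" if "i < n" for i
    proof -
      have "(\<lambda>x. x i) \<in> measurable (PiM {..<n} \<mu>) (\<mu> i)"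
        by (rule measurable_component_singleton) (use that in auto)
      then show ?thesis using measurable_cong_sets[OF refl mu(2)[of i]] by blast
    qed
    have "sexp P (\<lambda>w. ?g (rvec Ys w)) = (\<integral>x. ?g (rvec (map (\<lambda>i x. x i) [0..<n]) x) \<partial>(PiM {..<n} \<mu>))"
    proof (rule rep_classical[OF sle Ym lY N _ _ _ lcont_sum1[OF fc], where B=B])
      show "\<And>Y. Y \<in> set (map (\<lambda>i x. x i) [0..<n]) \<Longrightarrow> Y \<in> borel_measurable (PiM {..<n} \<mu>)"
        using cm by auto
      show "length (map (\<lambda>i x. x i) [0..<n]) = n" by simp
      show "\<And>y. length y = n \<Longrightarrow> \<bar>?g y\<bar> \<le> B" using fB by auto
      fix g :: "real list \<Rightarrow> real" assume "bLip n g"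
      then show "sexp P (\<lambda>w. g (rvec Ys w)) = (\<integral>x. g (rvec (map (\<lambda>i x. x i) [0..<n]) x) \<partial>(PiM {..<n} \<mu>))"
        using ci lY unfolding classical_indep_def by (simp add: rvec_def comp_def)
    qed
    also have "\<dots> = (\<integral>x. \<phi> ((\<Sum>i<n. v!i * x i) / sqrt (real n)) \<partial>(PiM {..<n} \<mu>))"
      by (simp add: rvec_def)
    finally show ?thesis using eqf by simp
  qed
  ultimately show ?thesis by simp
qed

end

definition cube :: "nat \<Rightarrow> real \<Rightarrow> real \<Rightarrow> real list set" where
  "cube n a b = {v. length v = n \<and> set v \<subseteq> {a..b}}"

lemma cube1: "cube 1 a b = (\<lambda>v. [v]) ` {a..b}"
proof (rule set_eqI)
  fix v show "v \<in> cube 1 a b \<longleftrightarrow> v \<in> (\<lambda>v. [v]) ` {a..b}"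
    unfolding cube_def by (cases v) auto
qed

lemma cube_Suc: "cube (Suc n) a b = {v @ [u] | v u. v \<in> cube n a b \<and> u \<in> {a..b}}"
proof (rule set_eqI)
  fix v show "v \<in> cube (Suc n) a b \<longleftrightarrow> v \<in> {v @ [u] | v u. v \<in> cube n a b \<and> u \<in> {a..b}}"
    unfolding cube_def by (cases v rule: rev_cases) auto
qed

lemma cube_ne: "a \<le> b \<Longrightarrow> cube n a b \<noteq> {}"
  unfolding cube_def by (auto intro!: exI[of _ "replicate n a"])

lemma maxrep_cube:
  assumes sle: "sle_space M P" and ab: "a \<le> b"
    and md: "\<And>i. i \<ge> 1 \<Longrightarrow> maximal_dist P (V i) a b"
    and ind: "\<And>i. i \<ge> 1 \<Longrightarrow> sl_indep P (map V [1..<i+1]) [V (i+1)]"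
    and Vm: "\<And>i. i \<ge> 1 \<Longrightarrow> V i \<in> borel_measurable M"
  shows "maxrep P (map V [1..<k+2]) (cube (k+1) a b)"
proof (induction k)
  case 0
  have "cube 1 a b = (\<lambda>v. [v]) ` {a..b}" by (rule cube1)
  then show ?case using maxrep_single[OF md[of 1]] by simp
next
  case (Suc k)
  have e: "map V [1..<Suc k + 2] = map V [1..<k+2] @ [V (k+2)]" by simp
  have "maxrep P (map V [1..<k+2] @ [V (k+2)]) {v @ [u] | v u. v \<in> cube (k+1) a b \<and> u \<in> {a..b}}"
  proof (rule maxrep_step[OF sle Suc cube_ne[OF ab] _ md[of "k+2"] ab])
    show "cube (k + 1) a b \<subseteq> {v. length v = length (map V [1..<k + 2])}" by (auto simp: cube_def)
    show "sl_indep P (map V [1..<k + 2]) [V (k + 2)]" using ind[of "k+1"] by (simp add: numeral_2_eq_2)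
    show "\<And>Y. Y \<in> set (map V [1..<k + 2]) \<Longrightarrow> Y \<in> borel_measurable M" using Vm by auto
    show "V (k + 2) \<in> borel_measurable M" using Vm by auto
  qed simp
  then show ?case using e cube_Suc[of "k+1" a b] by simp
qed


lemma iexp_split: "iexp x = complex_of_real (cos x) + \<i> * complex_of_real (sin x)"
  by (simp add: complex_eq_iff cis_conv_exp[symmetric])

lemma char_eqI:
  fixes M1 M2 :: "real measure"
  assumes "prob_space M1" "prob_space M2"
    and sM: "sets M1 = sets borel" "sets M2 = sets borel"
    and c: "\<And>t. (\<integral>x. cos (t * x) \<partial>M1) = (\<integral>x. cos (t * x) \<partial>M2)"
    and s: "\<And>t. (\<integral>x. sin (t * x) \<partial>M1) = (\<integral>x. sin (t * x) \<partial>M2)"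
  shows "M1 = M2"
proof (rule Levy_uniqueness)
  show r1: "real_distribution M1" "real_distribution M2"
    using assms unfolding real_distribution_def real_distribution_axioms_def by auto
  have ch: "char M t = complex_of_real (\<integral>x. cos (t * x) \<partial>M) + \<i> * complex_of_real (\<integral>x. sin (t * x) \<partial>M)"
    if "real_distribution M" for M t
  proof -
    interpret real_distribution M by fact
    have ic: "integrable M (\<lambda>x. complex_of_real (cos (t * x)))"
      by (rule integrable_const_bound[where B=1]) auto
    have is': "integrable M (\<lambda>x. \<i> * complex_of_real (sin (t * x)))"
      by (rule integrable_const_bound[where B=1]) (auto simp: norm_mult)
    have "char M t = (\<integral>x. complex_of_real (cos (t * x)) + \<i> * complex_of_real (sin (t * x)) \<partial>M)"
      unfolding char_def iexp_split ..
    also have "\<dots> = (\<integral>x. complex_of_real (cos (t * x)) \<partial>M) + (\<integral>x. \<i> * complex_of_real (sin (t * x)) \<partial>M)"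
      by (rule Bochner_Integration.integral_add[OF ic is'])
    also have "\<dots> = complex_of_real (\<integral>x. cos (t * x) \<partial>M) + \<i> * complex_of_real (\<integral>x. sin (t * x) \<partial>M)"
      by (simp add: integral_complex_of_real)
    finally show ?thesis .
  qed
  show "char M1 = char M2"
    by (rule ext) (simp add: ch[OF r1(1)] ch[OF r1(2)] c s)
qed

lemma H_cont:
  fixes h :: "real \<Rightarrow> real"
  assumes N: "prob_space N" "sets N = sets borel" and hc: "continuous_on UNIV h" and hB: "\<And>x. \<bar>h x\<bar> \<le> B"
  shows "isCont (\<lambda>v. \<integral>x. h (v * x) \<partial>N) v0"
proof (unfold continuous_at_sequentially comp_def, intro allI impI)
  fix vs assume vs: "vs \<longlonglongrightarrow> v0"
  have hm: "(\<lambda>x. h (c * x)) \<in> borel_measurable N" for c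
  proof -
    have "(\<lambda>x. h (c * x)) \<in> borel_measurable borel"
      by (intro borel_measurable_continuous_onI continuous_on_compose2[OF hc]) (auto intro!: continuous_intros)
    then show ?thesis unfolding measurable_cong_sets[OF N(2) refl] .
  qed
  have isc: "isCont h x" for x using hc continuous_on_eq_continuous_at open_UNIV by blast
  show "(\<lambda>k. \<integral>x. h (vs k * x) \<partial>N) \<longlonglongrightarrow> (\<integral>x. h (v0 * x) \<partial>N)"
  proof (rule prob_int_tendsto[OF N(1) hm hm])
    show "\<bar>h (vs k * w)\<bar> \<le> B" for k w by (rule hB)
    fix w
    have "(\<lambda>k. vs k * w) \<longlonglongrightarrow> v0 * w" by (intro tendsto_intros vs)
    from isCont_tendsto_compose[OF isc this] show "(\<lambda>k. h (vs k * w)) \<longlonglongrightarrow> h (v0 * w)" .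
  qed
qed

lemma F_lower:
  fixes H :: "real \<Rightarrow> real"
  assumes ab: "a \<le> b" and HB: "\<And>v. \<bar>H v\<bar> \<le> B" and lam: "0 \<le> lam" and a0: "0 \<le> a"
  shows "lam * b^2 + H b \<le> (SUP v\<in>{a..b}. lam * v^2 + H v)"
proof (rule cSUP_upper)
  show "b \<in> {a..b}" using ab by simp
  show "bdd_above ((\<lambda>v. lam * v^2 + H v) ` {a..b})"
  proof (rule bdd_aboveI[of _ "lam * b^2 + B"])
    fix y assume "y \<in> (\<lambda>v. lam * v^2 + H v) ` {a..b}"
    then obtain v where v: "v \<in> {a..b}" "y = lam * v^2 + H v" by auto
    have "v^2 \<le> b^2" using v(1) a0 by (intro power_mono) auto
    then have "lam * v^2 \<le> lam * b^2" using lam by (rule mult_left_mono)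
    then show "y \<le> lam * b^2 + B" using v(2) HB[of v] by (simp add: abs_le_iff)
  qed
qed

lemma F_upper:
  fixes H :: "real \<Rightarrow> real"
  assumes ab: "a \<le> b" and a0: "0 \<le> a" and b0: "0 < b" and HB: "\<And>v. \<bar>H v\<bar> \<le> B"
    and Hc: "isCont H b" and e: "e > 0"
  shows "\<exists>L0. \<forall>lam\<ge>L0. (SUP v\<in>{a..b}. lam * v^2 + H v) \<le> lam * b^2 + H b + e"
proof -
  obtain d where d: "d > 0" "\<And>v. \<bar>v - b\<bar> < d \<Longrightarrow> \<bar>H v - H b\<bar> < e"
    using Hc e unfolding continuous_at_eps_delta dist_real_def by blast
  define d' where "d' = min d b"
  have d': "0 < d'" "d' \<le> d" "d' \<le> b" using d b0 by (auto simp: d'_def)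
  define L0 where "L0 = 2 * B / (d' * b)"
  have gap: "b^2 - (b - d')^2 \<ge> d' * b" using d' by (simp add: power2_eq_square algebra_simps)
  have B0: "B \<ge> 0" using HB[of 0] by simp
  show ?thesis
  proof (intro exI allI impI)
    fix lam assume lam: "L0 \<le> lam"
    have lam0: "0 \<le> lam" using lam B0 d' b0 unfolding L0_def by (smt (verit) divide_nonneg_nonneg mult_pos_pos)
    show "(SUP v\<in>{a..b}. lam * v^2 + H v) \<le> lam * b^2 + H b + e"
    proof (rule cSUP_least)
      show "{a..b} \<noteq> {}" using ab by simp
      fix v assume v: "v \<in> {a..b}"
      show "lam * v^2 + H v \<le> lam * b^2 + H b + e"
      proof (cases "v > b - d'")
        case True
        then have vb: "\<bar>v - b\<bar> < d" using v d' by auto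
        have "H v \<le> H b + e" using abs_less_iff[THEN iffD1, OF d(2)[OF vb]] by linarith
        moreover have "lam * v^2 \<le> lam * b^2" using v a0 lam0 by (intro mult_left_mono power_mono) auto
        ultimately show ?thesis by simp
      next
        case False
        then have "v^2 \<le> (b - d')^2" using v a0 by (intro power_mono) auto
        then have "lam * v^2 \<le> lam * (b - d')^2" using lam0 by (rule mult_left_mono)
        also have "\<dots> \<le> lam * b^2 - lam * (d' * b)" using gap lam0
          by (smt (verit) mult_left_mono right_diff_distrib)
        also have "lam * (d' * b) \<ge> 2 * B"
        proof -
          have "L0 * (d' * b) = 2 * B" unfolding L0_def using d' b0 by simp
          then show ?thesis using lam d' b0 by (smt (verit) mult_right_mono mult_pos_pos)
        qed
        then have "lam * b^2 - lam * (d' * b) \<le> lam * b^2 - 2 * B" by simp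
        finally have "lam * v^2 \<le> lam * b^2 - 2 * B" .
        moreover have "H v \<le> B" "- B \<le> H b" using HB[of v] HB[of b] by (auto simp: abs_le_iff)
        ultimately show ?thesis using e by simp
      qed
    qed
  qed
qed

lemma F_conv:
  fixes h :: "real \<Rightarrow> real" and N :: "real measure"
  assumes N: "prob_space N" "sets N = sets borel" and i2: "integrable N (\<lambda>x. x^2)" and v1: "(\<integral>x. x^2 \<partial>N) = 1"
    and hc: "continuous_on UNIV h" and hB: "\<And>x. \<bar>h x\<bar> \<le> Bh"
    and lam: "0 \<le> lam" and ab: "a \<le> b" and a0: "0 \<le> a"
  shows "(\<lambda>K::nat. SUP v\<in>{a..b}. \<integral>x. lam * min ((v * x)^2) (real K) + h (v * x) \<partial>N)
           \<longlonglongrightarrow> (SUP v\<in>{a..b}. lam * v^2 + (\<integral>x. h (v * x) \<partial>N))"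
proof (rule SUP_incseq_tendsto)
  interpret N: prob_space N by (rule N(1))
  have mb: "f \<in> borel_measurable borel \<Longrightarrow> f \<in> borel_measurable N" for f :: "real \<Rightarrow> real"
    unfolding measurable_cong_sets[OF N(2) refl] .
  have hm: "(\<lambda>x. h (v * x)) \<in> borel_measurable N" for v
    by (rule mb, intro borel_measurable_continuous_onI continuous_on_compose2[OF hc]) (auto intro!: continuous_intros)
  have hi: "integrable N (\<lambda>x. h (v * x))" for v
    by (rule N.integrable_const_bound[where B=Bh]) (use hB hm in auto)
  have minm: "(\<lambda>x. min ((v * x)^2) (real K)) \<in> borel_measurable N" for v K
    by (rule mb) simp
  have mini: "integrable N (\<lambda>x. min ((v * x)^2) (real K))" for v K
    by (rule N.integrable_const_bound[where B="real K"]) (use minm in auto)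
  have sqi: "integrable N (\<lambda>x. (v * x)^2)" for v
    using integrable_mult_left[OF i2, of "v^2"] by (simp add: power_mult_distrib)
  have sq: "(\<integral>x. (v * x)^2 \<partial>N) = v^2" for v
    using v1 by (simp add: power_mult_distrib)
  have split: "(\<integral>x. lam * min ((v * x)^2) (real K) + h (v * x) \<partial>N) =
       lam * (\<integral>x. min ((v * x)^2) (real K) \<partial>N) + (\<integral>x. h (v * x) \<partial>N)" for v K
    using mini[of v K] hi[of v] by simp
  have Hb: "\<bar>\<integral>x. h (v * x) \<partial>N\<bar> \<le> Bh" for v
    by (rule prob_bounded_integrable(2)[OF N(1) hm]) (rule hB)
  have m0: "0 \<le> (\<integral>x. min ((v * x)^2) (real K) \<partial>N)" for v K
    by (rule integral_nonneg_AE) auto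
  have m1: "(\<integral>x. min ((v * x)^2) (real K) \<partial>N) \<le> v^2" for v K
  proof -
    have "(\<integral>x. min ((v * x)^2) (real K) \<partial>N) \<le> (\<integral>x. (v * x)^2 \<partial>N)"
      by (rule integral_mono[OF mini sqi]) auto
    then show ?thesis using sq by simp
  qed
  show "{a..b} \<noteq> {}" using ab by simp
  fix v assume v: "v \<in> {a..b}"
  have vb: "v^2 \<le> b^2" using v a0 by (intro power_mono) auto
  show "(\<integral>x. lam * min ((v * x)^2) (real K) + h (v * x) \<partial>N) \<le> (\<integral>x. lam * min ((v * x)^2) (real K') + h (v * x) \<partial>N)"
    if "K \<le> K'" for K K'
  proof -
    have "(\<integral>x. min ((v * x)^2) (real K) \<partial>N) \<le> (\<integral>x. min ((v * x)^2) (real K') \<partial>N)"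
      by (rule integral_mono[OF mini mini]) (use that in auto)
    then show ?thesis unfolding split using lam by (simp add: mult_left_mono)
  qed
  show "\<bar>\<integral>x. lam * min ((v * x)^2) (real K) + h (v * x) \<partial>N\<bar> \<le> lam * b^2 + Bh" for K
  proof -
    have "0 \<le> lam * (\<integral>x. min ((v * x)^2) (real K) \<partial>N)" using lam m0 by simp
    moreover have "lam * (\<integral>x. min ((v * x)^2) (real K) \<partial>N) \<le> lam * b^2"
      using m1[of v K] vb lam by (smt (verit) mult_left_mono)
    ultimately show ?thesis unfolding split using Hb[of v] by (simp add: abs_le_iff)
  qed
  have "(\<lambda>K::nat. \<integral>x. min ((v * x)^2) (real K) \<partial>N) \<longlonglongrightarrow> (\<integral>x. (v * x)^2 \<partial>N)"
  proof (rule integral_dominated_convergence[where w="\<lambda>x. (v * x)^2"])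
    show "(\<lambda>x. (v * x)^2) \<in> borel_measurable N" by (rule mb) simp
    show "integrable N (\<lambda>x. (v * x)^2)" by (rule sqi)
    show "AE x in N. (\<lambda>K. min ((v * x)^2) (real K)) \<longlonglongrightarrow> (v * x)^2"
    proof (rule AE_I2)
      fix x :: real
      have "\<forall>\<^sub>F K in sequentially. min ((v * x)^2) (real K) = (v * x)^2"
        using eventually_ge_at_top[of "nat \<lceil>(v * x)^2\<rceil>"]
        by eventually_elim (use real_nat_ceiling_ge[of "(v * x)^2"] in \<open>auto simp: min_def\<close>)
      then show "(\<lambda>K. min ((v * x)^2) (real K)) \<longlonglongrightarrow> (v * x)^2"
        by (rule tendsto_eventually)
    qed
    show "AE x in N. norm (min ((v * x)^2) (real K)) \<le> (v * x)^2" for K by auto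
  qed (use minm in auto)
  then have "(\<lambda>K::nat. lam * (\<integral>x. min ((v * x)^2) (real K) \<partial>N) + (\<integral>x. h (v * x) \<partial>N)) \<longlonglongrightarrow>
        lam * v^2 + (\<integral>x. h (v * x) \<partial>N)"
    unfolding sq by (intro tendsto_intros)
  then show "(\<lambda>K. \<integral>x. lam * min ((v * x)^2) (real K) + h (v * x) \<partial>N) \<longlonglongrightarrow> lam * v^2 + (\<integral>x. h (v * x) \<partial>N)"
    unfolding split .
qed

lemma H_eq:
  fixes \<mu>1 \<mu>2 :: "real measure" and h :: "real \<Rightarrow> real"
  assumes N1: "prob_space \<mu>1" "sets \<mu>1 = sets borel" "integrable \<mu>1 (\<lambda>x. x^2)" "(\<integral>x. x^2 \<partial>\<mu>1) = 1"
    and N2: "prob_space \<mu>2" "sets \<mu>2 = sets borel" "integrable \<mu>2 (\<lambda>x. x^2)" "(\<integral>x. x^2 \<partial>\<mu>2) = 1"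
    and a0: "0 \<le> a" and ab: "a \<le> b" and b0: "0 < b"
    and eq: "\<And>(\<psi>::real \<Rightarrow> real) B. continuous_on UNIV \<psi> \<Longrightarrow> (\<And>x. \<bar>\<psi> x\<bar> \<le> B) \<Longrightarrow>
               (SUP v\<in>{a..b}. \<integral>x. \<psi> (v * x) \<partial>\<mu>1) = (SUP v\<in>{a..b}. \<integral>x. \<psi> (v * x) \<partial>\<mu>2)"
    and hc: "continuous_on UNIV h" and hB: "\<And>x. \<bar>h x\<bar> \<le> Bh"
  shows "(\<integral>x. h (b * x) \<partial>\<mu>1) = (\<integral>x. h (b * x) \<partial>\<mu>2)"
proof -
  define H1 where "H1 v = (\<integral>x. h (v * x) \<partial>\<mu>1)" for v
  define H2 where "H2 v = (\<integral>x. h (v * x) \<partial>\<mu>2)" for v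
  have Feq: "(SUP v\<in>{a..b}. lam * v^2 + H1 v) = (SUP v\<in>{a..b}. lam * v^2 + H2 v)" if lam: "0 \<le> lam" for lam
  proof -
    have l1: "(\<lambda>K::nat. SUP v\<in>{a..b}. \<integral>x. lam * min ((v * x)^2) (real K) + h (v * x) \<partial>\<mu>1)
           \<longlonglongrightarrow> (SUP v\<in>{a..b}. lam * v^2 + H1 v)"
      unfolding H1_def by (rule F_conv[OF N1 hc hB lam ab a0])
    have l2: "(\<lambda>K::nat. SUP v\<in>{a..b}. \<integral>x. lam * min ((v * x)^2) (real K) + h (v * x) \<partial>\<mu>2)
           \<longlonglongrightarrow> (SUP v\<in>{a..b}. lam * v^2 + H2 v)"
      unfolding H2_def by (rule F_conv[OF N2 hc hB lam ab a0])
    have "(SUP v\<in>{a..b}. \<integral>x. lam * min ((v * x)^2) (real K) + h (v * x) \<partial>\<mu>1) =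
          (SUP v\<in>{a..b}. \<integral>x. lam * min ((v * x)^2) (real K) + h (v * x) \<partial>\<mu>2)" for K :: nat
    proof -
      let ?psi = "\<lambda>y. lam * min (y^2) (real K) + h y"
      have c: "continuous_on UNIV ?psi" by (intro continuous_intros hc)
      have b: "\<bar>?psi y\<bar> \<le> lam * real K + Bh" for y
      proof -
        have "0 \<le> lam * min (y^2) (real K)" using lam by simp
        moreover have "lam * min (y^2) (real K) \<le> lam * real K" using lam by (intro mult_left_mono) auto
        ultimately show ?thesis using hB[of y] by (simp add: abs_le_iff)
      qed
      from eq[of ?psi "lam * real K + Bh", OF c b] show ?thesis by (simp add: power_mult_distrib)
    qed
    then show ?thesis using LIMSEQ_unique[OF l1] l2 by simp
  qed
  have HB1: "\<bar>H1 v\<bar> \<le> Bh" for v unfolding H1_def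
  proof (rule prob_bounded_integrable(2)[OF N1(1)])
    show "(\<lambda>x. h (v * x)) \<in> borel_measurable \<mu>1" unfolding measurable_cong_sets[OF N1(2) refl]
      by (intro borel_measurable_continuous_onI continuous_on_compose2[OF hc]) (auto intro!: continuous_intros)
  qed (rule hB)
  have HB2: "\<bar>H2 v\<bar> \<le> Bh" for v unfolding H2_def
  proof (rule prob_bounded_integrable(2)[OF N2(1)])
    show "(\<lambda>x. h (v * x)) \<in> borel_measurable \<mu>2" unfolding measurable_cong_sets[OF N2(2) refl]
      by (intro borel_measurable_continuous_onI continuous_on_compose2[OF hc]) (auto intro!: continuous_intros)
  qed (rule hB)
  have Hc1: "isCont H1 b" unfolding H1_def by (rule H_cont[OF N1(1,2) hc hB])
  have Hc2: "isCont H2 b" unfolding H2_def by (rule H_cont[OF N2(1,2) hc hB])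
  have le: "Ha b \<le> Hb b + e"
    if e: "e > 0" and HBa: "\<And>v. \<bar>Ha v\<bar> \<le> Bh" and HBb: "\<And>v. \<bar>Hb v\<bar> \<le> Bh" and Hcb: "isCont Hb b"
      and F: "\<And>lam. 0 \<le> lam \<Longrightarrow> (SUP v\<in>{a..b}. lam * v^2 + Ha v) = (SUP v\<in>{a..b}. lam * v^2 + Hb v)"
    for Ha Hb :: "real \<Rightarrow> real" and e
  proof -
    obtain L0 where L0: "\<And>lam. lam \<ge> L0 \<Longrightarrow> (SUP v\<in>{a..b}. lam * v^2 + Hb v) \<le> lam * b^2 + Hb b + e"
      using F_upper[OF ab a0 b0 HBb Hcb e] by blast
    define lam where "lam = max L0 0"
    have "lam * b^2 + Ha b \<le> (SUP v\<in>{a..b}. lam * v^2 + Ha v)"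
      by (rule F_lower[OF ab HBa]) (use a0 in \<open>auto simp: lam_def\<close>)
    also have "\<dots> = (SUP v\<in>{a..b}. lam * v^2 + Hb v)" by (rule F) (simp add: lam_def)
    also have "\<dots> \<le> lam * b^2 + Hb b + e" by (rule L0) (simp add: lam_def)
    finally show ?thesis by simp
  qed
  have "H1 b \<le> H2 b + e" if "e > 0" for e by (rule le[OF that HB1 HB2 Hc2 Feq])
  then have "H1 b \<le> H2 b" by (meson field_le_epsilon)
  moreover have "H2 b \<le> H1 b + e" if "e > 0" for e by (rule le[OF that HB2 HB1 Hc1 Feq[symmetric]])
  then have "H2 b \<le> H1 b" by (meson field_le_epsilon)
  ultimately show ?thesis unfolding H1_def H2_def by simp
qed

lemma same_law:
  fixes \<mu>1 \<mu>2 :: "real measure"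
  assumes N1: "prob_space \<mu>1" "sets \<mu>1 = sets borel" "integrable \<mu>1 (\<lambda>x. x^2)" "(\<integral>x. x^2 \<partial>\<mu>1) = 1"
    and N2: "prob_space \<mu>2" "sets \<mu>2 = sets borel" "integrable \<mu>2 (\<lambda>x. x^2)" "(\<integral>x. x^2 \<partial>\<mu>2) = 1"
    and a0: "0 \<le> a" and ab: "a \<le> b" and b0: "0 < b"
    and eq: "\<And>(\<psi>::real \<Rightarrow> real) B. continuous_on UNIV \<psi> \<Longrightarrow> (\<And>x. \<bar>\<psi> x\<bar> \<le> B) \<Longrightarrow>
               (SUP v\<in>{a..b}. \<integral>x. \<psi> (v * x) \<partial>\<mu>1) = (SUP v\<in>{a..b}. \<integral>x. \<psi> (v * x) \<partial>\<mu>2)"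
  shows "\<mu>1 = \<mu>2"
proof (rule char_eqI[OF N1(1) N2(1) N1(2) N2(2)])
  fix t :: real
  have bn: "b \<noteq> 0" using b0 by simp
  have tb: "t / b * (b * x) = t * x" for x using bn by simp
  have "(\<integral>x. (\<lambda>y. cos (t / b * y)) (b * x) \<partial>\<mu>1) = (\<integral>x. (\<lambda>y. cos (t / b * y)) (b * x) \<partial>\<mu>2)"
    by (rule H_eq[OF N1 N2 a0 ab b0 eq, where Bh=1]) (use bn in \<open>auto intro!: continuous_intros\<close>)
  then show "(\<integral>x. cos (t * x) \<partial>\<mu>1) = (\<integral>x. cos (t * x) \<partial>\<mu>2)" by (simp only: tb)
  have "(\<integral>x. (\<lambda>y. sin (t / b * y)) (b * x) \<partial>\<mu>1) = (\<integral>x. (\<lambda>y. sin (t / b * y)) (b * x) \<partial>\<mu>2)"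
    by (rule H_eq[OF N1 N2 a0 ab b0 eq, where Bh=1]) (use bn in \<open>auto intro!: continuous_intros\<close>)
  then show "(\<integral>x. sin (t * x) \<partial>\<mu>1) = (\<integral>x. sin (t * x) \<partial>\<mu>2)" by (simp only: tb)
qed


lemma isCont_of_cont6: "continuous_on UNIV \<phi> \<Longrightarrow> isCont \<phi> x"
  using continuous_on_eq_continuous_at open_UNIV by blast


lemma exp_quad_bound:
  fixes a :: real assumes "0 \<le> a" "a \<le> 1"
  shows "\<bar>exp (- a) - (1 - a)\<bar> \<le> 2 * a^2"
proof -
  obtain t where t: "\<bar>t\<bar> \<le> \<bar>-a\<bar>" "exp (-a) = (\<Sum>m<2. (-a) ^ m / fact m) + exp t / fact 2 * (-a) ^ 2"
    using Maclaurin_exp_le[of "-a" 2] by blast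
  have s: "(\<Sum>m<2. (-a) ^ m / fact m) = 1 - a" by (simp add: numeral_2_eq_2)
  have "exp t \<le> exp 1" using t(1) assms by simp
  also have "\<dots> \<le> 3" by (rule exp_le)
  finally have et: "exp t \<le> 3" .
  have "\<bar>exp (- a) - (1 - a)\<bar> = exp t / 2 * a^2" using t(2) s by (simp add: numeral_2_eq_2)
  also have "\<dots> \<le> 3 / 2 * a^2" using et by (intro mult_right_mono divide_right_mono) auto
  also have "\<dots> \<le> 2 * a^2" by simp
  finally show ?thesis .
qed

context
  fixes \<mu> :: "real measure"
  assumes rd: "real_distribution \<mu>"
    and i1: "integrable \<mu> (\<lambda>x. x)" and i2: "integrable \<mu> (\<lambda>x. x^2)"
    and m0: "(\<integral>x. x \<partial>\<mu>) = 0" and v1: "(\<integral>x. x^2 \<partial>\<mu>) = 1"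
begin

interpretation mu: real_distribution \<mu> by (rule rd)

definition RR :: "real \<Rightarrow> real" where
  "RR r = (\<integral>x. min (6 * x^2) (r * \<bar>x\<bar>^3) \<partial>\<mu>)"

lemma RR_integrable: "0 \<le> r \<Longrightarrow> integrable \<mu> (\<lambda>x. min (6 * x^2) (r * \<bar>x\<bar>^3))"
proof (rule Bochner_Integration.integrable_bound[where f="\<lambda>x. 6 * x^2"])
  assume r: "0 \<le> r"
  show "AE x in \<mu>. norm (min (6 * x^2) (r * \<bar>x\<bar>^3)) \<le> norm (6 * x^2)"
  proof (rule AE_I2)
    fix x :: real
    have "0 \<le> min (6 * x^2) (r * \<bar>x\<bar>^3)" using r by simp
    then show "norm (min (6 * x^2) (r * \<bar>x\<bar>^3)) \<le> norm (6 * x^2)" by simp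
  qed
qed (auto intro!: i2)

lemma RR_mono: "0 \<le> r \<Longrightarrow> r \<le> r' \<Longrightarrow> RR r \<le> RR r'"
  unfolding RR_def
proof (rule integral_mono[OF RR_integrable RR_integrable])
  fix x :: real assume "0 \<le> r" "r \<le> r'"
  then have "r * \<bar>x\<bar>^3 \<le> r' * \<bar>x\<bar>^3" by (intro mult_right_mono) auto
  then show "min (6 * x^2) (r * \<bar>x\<bar>^3) \<le> min (6 * x^2) (r' * \<bar>x\<bar>^3)" by (simp add: min_def)
qed auto

lemma RR_nonneg: "0 \<le> r \<Longrightarrow> 0 \<le> RR r"
  unfolding RR_def by (rule integral_nonneg_AE) auto

lemma RR_tendsto:
  assumes "rs \<longlonglongrightarrow> 0" "\<And>k. rs k \<ge> 0"
  shows "(\<lambda>k. RR (rs k)) \<longlonglongrightarrow> 0"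
proof -
  have "(\<lambda>k. \<integral>x. min (6 * x^2) (rs k * \<bar>x\<bar>^3) \<partial>\<mu>) \<longlonglongrightarrow> (\<integral>x. 0 \<partial>\<mu>)"
  proof (rule integral_dominated_convergence[where w="\<lambda>x. 6 * x^2"])
    show "integrable \<mu> (\<lambda>x. 6 * x^2)" using i2 by auto
    show "AE x in \<mu>. (\<lambda>k. min (6 * x^2) (rs k * \<bar>x\<bar>^3)) \<longlonglongrightarrow> 0"
    proof (rule AE_I2)
      fix x :: real
      have "(\<lambda>k. rs k * \<bar>x\<bar>^3) \<longlonglongrightarrow> 0 * \<bar>x\<bar>^3" using tendsto_mult_right_zero[OF assms(1), of "\<bar>x\<bar>^3"] by (simp add: mult.commute)
      then have "(\<lambda>k. min (6 * x^2) (rs k * \<bar>x\<bar>^3)) \<longlonglongrightarrow> min (6 * x^2) (0 * \<bar>x\<bar>^3)"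
        by (rule tendsto_min[OF tendsto_const])
      then show "(\<lambda>k. min (6 * x^2) (rs k * \<bar>x\<bar>^3)) \<longlonglongrightarrow> 0" by simp
    qed
    show "AE x in \<mu>. norm (min (6 * x^2) (rs k * \<bar>x\<bar>^3)) \<le> 6 * x^2" for k
      using assms(2)[of k] by (intro AE_I2) (auto simp: abs_le_iff)
  qed auto
  then show ?thesis unfolding RR_def by simp
qed

lemma char_bound:
  "cmod (char \<mu> u - complex_of_real (exp (- (u^2 / 2)))) \<le> u^2 / 6 * RR \<bar>u\<bar> + 2 * (u^2/2)^2"
  if "u^2 / 2 \<le> 1" for u
proof -
  have var: "(\<integral>x. (x - (\<integral>x. x \<partial>\<mu>))^2 \<partial>\<mu>) = 1" using m0 v1 by simp
  have c1: "cmod (char \<mu> u - complex_of_real (1 - u^2 * 1 / 2)) \<le> u^2 / 6 * RR \<bar>u\<bar>"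
    using mu.char_approx3[OF i1 m0 _ var, of u] i2 unfolding RR_def by (simp add: power2_eq_square)
  have c2: "cmod (complex_of_real (1 - u^2 / 2) - complex_of_real (exp (- (u^2 / 2)))) \<le> 2 * (u^2/2)^2"
  proof -
    have "cmod (complex_of_real (1 - u^2 / 2) - complex_of_real (exp (- (u^2 / 2)))) =
          \<bar>exp (- (u^2 / 2)) - (1 - u^2/2)\<bar>"
      by (simp only: of_real_diff[symmetric] norm_of_real abs_minus_commute)
    also have "\<dots> \<le> 2 * (u^2/2)^2" by (rule exp_quad_bound) (use that in auto)
    finally show ?thesis .
  qed
  have "cmod (char \<mu> u - complex_of_real (exp (- (u^2 / 2)))) \<le>
        cmod (char \<mu> u - complex_of_real (1 - u^2 / 2)) + cmod (complex_of_real (1 - u^2 / 2) - complex_of_real (exp (- (u^2 / 2))))"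
    using norm_triangle_ineq[of "char \<mu> u - complex_of_real (1 - u^2 / 2)" "complex_of_real (1 - u^2 / 2) - complex_of_real (exp (- (u^2 / 2)))"]
    by simp
  then show ?thesis using c1 c2 by simp
qed

lemma char_prod_tendsto:
  fixes nk :: "nat \<Rightarrow> nat" and v :: "nat \<Rightarrow> real list"
  assumes nk: "filterlim nk at_top sequentially" and b: "0 \<le> b"
    and vb: "\<And>k i. i < nk k \<Longrightarrow> \<bar>v k ! i\<bar> \<le> b"
    and avg: "(\<lambda>k. (\<Sum>i<nk k. (v k ! i)^2) / real (nk k)) \<longlonglongrightarrow> s2"
  shows "(\<lambda>k. \<Prod>i<nk k. char \<mu> (t * v k ! i / sqrt (real (nk k)))) \<longlonglongrightarrow> complex_of_real (exp (- (s2 * t^2) / 2))"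
proof -
  define u where "u k i = t * v k ! i / sqrt (real (nk k))" for k i
  define r where "r k = \<bar>t\<bar> * b / sqrt (real (nk k))" for k
  have sq: "filterlim (\<lambda>k. sqrt (real (nk k))) at_top sequentially"
    by (rule filterlim_compose[OF sqrt_at_top filterlim_compose[OF filterlim_real_sequentially nk]])
  have r0: "r \<longlonglongrightarrow> 0"
    unfolding r_def by (rule tendsto_divide_0[OF tendsto_const filterlim_at_top_imp_at_infinity[OF sq]])
  have rnn: "r k \<ge> 0" for k unfolding r_def using b by simp
  have ev1: "\<forall>\<^sub>F k in sequentially. nk k \<ge> 1" using nk by (simp add: filterlim_at_top)
  have ev2: "\<forall>\<^sub>F k in sequentially. r k \<le> 1"
    using order_tendstoD(2)[OF r0, of 1] by (auto elim: eventually_mono)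
  define bnd where "bnd k = t^2 * b^2 / 6 * RR (r k) + (t^2 * b^2)^2 / (2 * real (nk k))" for k
  have ubound: "\<bar>u k i\<bar> \<le> r k" if "i < nk k" for k i
  proof -
    have "\<bar>t * v k ! i\<bar> \<le> \<bar>t\<bar> * b" using vb[OF that] by (simp add: abs_mult mult_left_mono)
    then show ?thesis unfolding u_def r_def abs_divide by (simp add: divide_right_mono)
  qed
  have main: "norm ((\<Prod>i<nk k. char \<mu> (u k i)) - (\<Prod>i<nk k. complex_of_real (exp (- ((u k i)^2 / 2))))) \<le> bnd k"
    if k1: "nk k \<ge> 1" and kr: "r k \<le> 1" for k
  proof -
    let ?n = "real (nk k)"
    have each: "cmod (char \<mu> (u k i) - complex_of_real (exp (- ((u k i)^2 / 2)))) \<le> (r k)^2 / 6 * RR (r k) + 2 * ((r k)^2 / 2)^2"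
      if i: "i < nk k" for i
    proof -
      have "\<bar>u k i\<bar>^2 \<le> (r k)^2" by (rule power_mono[OF ubound[OF i]]) simp
      then have ur: "(u k i)^2 \<le> (r k)^2" by simp
      have "(r k)^2 \<le> 1" using kr rnn[of k] by (simp add: power_le_one)
      then have "(u k i)^2 / 2 \<le> 1" using ur by simp
      then have "cmod (char \<mu> (u k i) - complex_of_real (exp (- ((u k i)^2 / 2)))) \<le>
           (u k i)^2 / 6 * RR \<bar>u k i\<bar> + 2 * ((u k i)^2/2)^2" by (rule char_bound)
      also have "\<dots> \<le> (r k)^2 / 6 * RR (r k) + 2 * ((r k)^2 / 2)^2"
      proof (rule add_mono)
        have "RR \<bar>u k i\<bar> \<le> RR (r k)" by (rule RR_mono) (use ubound[OF i] in auto)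
        then show "(u k i)^2 / 6 * RR \<bar>u k i\<bar> \<le> (r k)^2 / 6 * RR (r k)"
          by (intro mult_mono) (use ur RR_nonneg rnn in auto)
        have "((u k i)^2 / 2)^2 \<le> ((r k)^2 / 2)^2" by (rule power_mono) (use ur in auto)
        then show "2 * ((u k i)^2 / 2)^2 \<le> 2 * ((r k)^2 / 2)^2" by simp
      qed
      finally show ?thesis .
    qed
    have "norm ((\<Prod>i<nk k. char \<mu> (u k i)) - (\<Prod>i<nk k. complex_of_real (exp (- ((u k i)^2 / 2))))) \<le>
          (\<Sum>i<nk k. cmod (char \<mu> (u k i) - complex_of_real (exp (- ((u k i)^2 / 2)))))"
      by (rule norm_prod_diff) (auto intro: mu.cmod_char_le_1)
    also have "\<dots> \<le> (\<Sum>i<nk k. (r k)^2 / 6 * RR (r k) + 2 * ((r k)^2 / 2)^2)"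
      by (rule sum_mono) (rule each, simp)
    also have "\<dots> = ?n * ((r k)^2 / 6 * RR (r k) + 2 * ((r k)^2 / 2)^2)" by simp
    also have "\<dots> = bnd k"
    proof -
      have n0: "?n > 0" using k1 by simp
      have r2: "(r k)^2 = t^2 * b^2 / ?n" unfolding r_def using n0
        by (simp add: power_divide power_mult_distrib real_sqrt_pow2)
      show ?thesis unfolding bnd_def r2 using n0 by (simp add: field_simps power2_eq_square)
    qed
    finally show ?thesis .
  qed
  have bnd0: "bnd \<longlonglongrightarrow> 0"
  proof -
    have "(\<lambda>k. RR (r k)) \<longlonglongrightarrow> 0" by (rule RR_tendsto[OF r0 rnn])
    from tendsto_mult[OF tendsto_const[of "t^2 * b^2 / 6"] this]
    have A: "(\<lambda>k. t^2 * b^2 / 6 * RR (r k)) \<longlonglongrightarrow> 0" by simp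
    have B: "(\<lambda>k. (t^2 * b^2)^2 / (2 * real (nk k))) \<longlonglongrightarrow> 0"
      by (intro tendsto_divide_0[OF tendsto_const] filterlim_at_top_imp_at_infinity
            filterlim_tendsto_pos_mult_at_top[OF tendsto_const] filterlim_compose[OF filterlim_real_sequentially nk]) auto
    from tendsto_add[OF A B] show ?thesis unfolding bnd_def by simp
  qed
  have diff0: "(\<lambda>k. (\<Prod>i<nk k. char \<mu> (u k i)) - (\<Prod>i<nk k. complex_of_real (exp (- ((u k i)^2 / 2))))) \<longlonglongrightarrow> 0"
  proof (rule Lim_null_comparison[OF _ bnd0])
    show "\<forall>\<^sub>F k in sequentially. norm ((\<Prod>i<nk k. char \<mu> (u k i)) - (\<Prod>i<nk k. complex_of_real (exp (- ((u k i)^2 / 2))))) \<le> bnd k"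
      using ev1 ev2 by eventually_elim (rule main)
  qed
  have pe: "(\<Prod>i<nk k. complex_of_real (exp (- ((u k i)^2 / 2)))) =
            complex_of_real (exp (- (t^2 * ((\<Sum>i<nk k. (v k ! i)^2) / real (nk k))) / 2))" if "nk k \<ge> 1" for k
  proof -
    have "(\<Prod>i<nk k. complex_of_real (exp (- ((u k i)^2 / 2)))) = complex_of_real (\<Prod>i<nk k. exp (- ((u k i)^2 / 2)))"
      by simp
    also have "(\<Prod>i<nk k. exp (- ((u k i)^2 / 2))) = exp (\<Sum>i<nk k. - ((u k i)^2 / 2))"
      by (simp add: exp_sum)
    also have "(\<Sum>i<nk k. - ((u k i)^2 / 2)) = - (t^2 * ((\<Sum>i<nk k. (v k ! i)^2) / real (nk k))) / 2"
      using that unfolding u_def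
      by (simp add: power_divide power_mult_distrib sum_divide_distrib sum_distrib_left sum_negf[symmetric])
    finally show ?thesis .
  qed
  have lim2: "(\<lambda>k. complex_of_real (exp (- (t^2 * ((\<Sum>i<nk k. (v k ! i)^2) / real (nk k))) / 2))) \<longlonglongrightarrow>
              complex_of_real (exp (- (t^2 * s2) / 2))"
    by (intro tendsto_intros avg) auto
  have lim3: "(\<lambda>k. (\<Prod>i<nk k. complex_of_real (exp (- ((u k i)^2 / 2))))) \<longlonglongrightarrow> complex_of_real (exp (- (t^2 * s2) / 2))"
    by (rule Lim_transform_eventually[OF lim2]) (use ev1 pe in \<open>auto elim: eventually_mono\<close>)
  have "(\<lambda>k. ((\<Prod>i<nk k. char \<mu> (u k i)) - (\<Prod>i<nk k. complex_of_real (exp (- ((u k i)^2 / 2))))) +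
             (\<Prod>i<nk k. complex_of_real (exp (- ((u k i)^2 / 2))))) \<longlonglongrightarrow> 0 + complex_of_real (exp (- (t^2 * s2) / 2))"
    by (rule tendsto_add[OF diff0 lim3])
  then show ?thesis by (simp add: u_def mult.commute)
qed

lemma mu_sets: "sets \<mu> = sets borel"
  using rd unfolding real_distribution_def real_distribution_axioms_def by simp

lemma comp_meas: "i < (n::nat) \<Longrightarrow> (\<lambda>x. x i) \<in> borel_measurable (PiM {..<n} (\<lambda>_. \<mu>))"
  using measurable_component_singleton[of i "{..<n}" "\<lambda>_. \<mu>"] measurable_cong_sets[OF refl mu_sets] by auto

lemma lin_meas: "(\<lambda>x. (\<Sum>i<(n::nat). c i * x i) / d) \<in> borel_measurable (PiM {..<n} (\<lambda>_. \<mu>))"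
  by (intro borel_measurable_divide borel_measurable_sum borel_measurable_times borel_measurable_const comp_meas) auto

lemma PiM_prob: "prob_space (PiM {..<n} (\<lambda>_. \<mu>))"
  by (rule prob_space_PiM) (use mu.prob_space_axioms in auto)

lemma char_lin:
  fixes n :: nat
  shows "char (distr (PiM {..<n} (\<lambda>_. \<mu>)) borel (\<lambda>x. (\<Sum>i<n. c i * x i) / d)) t = (\<Prod>i<n. char \<mu> (t * c i / d))"
proof -
  interpret PS: product_prob_space "\<lambda>_::nat. \<mu>"
    by (rule product_prob_spaceI) (use mu.prob_space_axioms in auto)
  have "char (distr (PiM {..<n} (\<lambda>_. \<mu>)) borel (\<lambda>x. (\<Sum>i<n. c i * x i) / d)) t =
        (\<integral>x. iexp (t * ((\<Sum>i<n. c i * x i) / d)) \<partial>(PiM {..<n} (\<lambda>_. \<mu>)))"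
    unfolding char_def by (rule integral_distr[OF lin_meas]) simp
  also have "\<dots> = (\<integral>x. (\<Prod>i\<in>{..<n}. (\<lambda>i y. iexp (t * c i / d * y)) i (x i)) \<partial>(PiM {..<n} (\<lambda>_. \<mu>)))"
  proof (rule Bochner_Integration.integral_cong[OF refl])
    fix x :: "nat \<Rightarrow> real"
    have "\<i> * complex_of_real (t * ((\<Sum>i<n. c i * x i) / d)) = (\<Sum>i<n. \<i> * complex_of_real (t * c i / d * x i))"
      by (simp add: sum_distrib_left sum_divide_distrib[symmetric] of_real_sum[symmetric] ac_simps)
    then show "iexp (t * ((\<Sum>i<n. c i * x i) / d)) = (\<Prod>i\<in>{..<n}. (\<lambda>i y. iexp (t * c i / d * y)) i (x i))"
      by (simp add: exp_sum)
  qed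
  also have "\<dots> = (\<Prod>i\<in>{..<n}. integral\<^sup>L \<mu> (\<lambda>y. iexp (t * c i / d * y)))"
  proof (rule PS.product_integral_prod)
    fix i show "integrable \<mu> (\<lambda>y. iexp (t * c i / d * y))"
      by (rule mu.integrable_iexp) auto
  qed simp
  also have "\<dots> = (\<Prod>i<n. char \<mu> (t * c i / d))" by (simp add: char_def)
  finally show ?thesis .
qed

lemma clt_integral:
  fixes nk :: "nat \<Rightarrow> nat" and v :: "nat \<Rightarrow> real list" and \<phi> :: "real \<Rightarrow> real"
  assumes nk: "filterlim nk at_top sequentially" and b: "0 \<le> b"
    and vb: "\<And>k i. i < nk k \<Longrightarrow> \<bar>v k ! i\<bar> \<le> b"
    and avg: "(\<lambda>k. (\<Sum>i<nk k. (v k ! i)^2) / real (nk k)) \<longlonglongrightarrow> s2" and s2: "0 \<le> s2"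
    and fc: "continuous_on UNIV \<phi>" and fB: "\<And>x. \<bar>\<phi> x\<bar> \<le> B"
  shows "(\<lambda>k. \<integral>x. \<phi> ((\<Sum>i<nk k. v k ! i * x i) / sqrt (real (nk k))) \<partial>(PiM {..<nk k} (\<lambda>_. \<mu>)))
           \<longlonglongrightarrow> (\<integral>x. \<phi> (sqrt s2 * x) \<partial>std_normal_distribution)"
proof -
  define D where "D k = distr (PiM {..<nk k} (\<lambda>_. \<mu>)) borel (\<lambda>x. (\<Sum>i<nk k. v k ! i * x i) / sqrt (real (nk k)))" for k
  define D' where "D' = distr std_normal_distribution borel (\<lambda>x. sqrt s2 * x)"
  have rdD: "real_distribution (D k)" for k
    unfolding D_def by (rule prob_space.real_distribution_distr[OF PiM_prob lin_meas])
  interpret N: real_distribution std_normal_distribution by (rule real_dist_normal_dist)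
  have mN: "(\<lambda>x. sqrt s2 * x) \<in> borel_measurable std_normal_distribution"
    using measurable_cong_sets[OF N.events_eq_borel refl] by simp
  have rdD': "real_distribution D'"
    unfolding D'_def by (rule N.real_distribution_distr[OF mN])
  have charD': "char D' t = complex_of_real (exp (- (s2 * t^2) / 2))" for t
  proof -
    have "char D' t = (\<integral>x. iexp (t * (sqrt s2 * x)) \<partial>std_normal_distribution)"
      unfolding D'_def char_def by (rule integral_distr[OF mN]) simp
    also have "\<dots> = char std_normal_distribution (t * sqrt s2)"
      unfolding char_def by (simp add: ac_simps)
    also have "\<dots> = complex_of_real (exp (- (s2 * t^2) / 2))"
      using s2 by (simp add: char_std_normal_distribution power_mult_distrib mult.commute)
    finally show ?thesis .
  qed
  have "weak_conv_m D D'"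
  proof (rule levy_continuity[OF rdD rdD'])
    fix t
    have "char (D k) t = (\<Prod>i<nk k. char \<mu> (t * v k ! i / sqrt (real (nk k))))" for k
      unfolding D_def by (rule char_lin)
    then show "(\<lambda>k. char (D k) t) \<longlonglongrightarrow> char D' t"
      using char_prod_tendsto[OF nk b vb avg, of t] charD' by simp
  qed
  from weak_conv_imp_integral_bdd_continuous_conv[OF rdD rdD' this, of \<phi> B]
  have "(\<lambda>k. integral\<^sup>L (D k) \<phi>) \<longlonglongrightarrow> integral\<^sup>L D' \<phi>"
    using fB isCont_of_cont6[OF fc] by auto
  moreover have "integral\<^sup>L (D k) \<phi> = (\<integral>x. \<phi> ((\<Sum>i<nk k. v k ! i * x i) / sqrt (real (nk k))) \<partial>(PiM {..<nk k} (\<lambda>_. \<mu>)))" for k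
    unfolding D_def
    by (rule integral_distr[OF lin_meas]) (rule borel_measurable_continuous_onI[OF fc])
  moreover have "integral\<^sup>L D' \<phi> = (\<integral>x. \<phi> (sqrt s2 * x) \<partial>std_normal_distribution)"
    unfolding D'_def by (rule integral_distr[OF mN]) (rule borel_measurable_continuous_onI[OF fc])
  ultimately show ?thesis by simp
qed

end


lemma frequently_subseq:
  assumes "\<And>N. \<exists>n\<ge>N. P n"
  shows "\<exists>r::nat\<Rightarrow>nat. strict_mono r \<and> (\<forall>k. P (r k))"
proof -
  obtain f where f: "\<And>N. f N \<ge> N \<and> P (f N)" using assms by metis
  define r where "r k = rec_nat (f 0) (\<lambda>_ m. f (Suc m)) k" for k
  have r0: "r 0 = f 0" and rS: "r (Suc k) = f (Suc (r k))" for k by (simp_all add: r_def)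
  have "strict_mono r"
    unfolding strict_mono_Suc_iff using f rS by (metis Suc_le_lessD)
  moreover have "P (r k)" for k by (cases k) (use f r0 rS in auto)
  ultimately show ?thesis by blast
qed

lemma lcont_id1:
  fixes \<psi> :: "real \<Rightarrow> real"
  assumes "continuous_on UNIV \<psi>"
  shows "lcont 1 (\<lambda>l. \<psi> (l!0))"
proof (rule lcontI)
  fix x :: "real list" and ys :: "nat \<Rightarrow> real list" assume c: "\<And>i. i < 1 \<Longrightarrow> (\<lambda>k. ys k ! i) \<longlonglongrightarrow> x ! i"
  from isCont_tendsto_compose[OF isCont_of_cont[OF assms] c[of 0]]
  show "(\<lambda>k. \<psi> (ys k ! 0)) \<longlonglongrightarrow> \<psi> (x ! 0)" by simp
qed

lemma ident_ext:
  fixes M :: "'w measure" and P and X1 Xi :: "'w \<Rightarrow> real"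
  assumes sle: "sle_space M P" and m1: "X1 \<in> borel_measurable M" and mi: "Xi \<in> borel_measurable M"
    and id: "\<And>\<phi>. bLip1 \<phi> \<Longrightarrow> sexp P (\<lambda>w. \<phi> (Xi w)) = sexp P (\<lambda>w. \<phi> (X1 w))"
    and c: "continuous_on UNIV \<psi>" and b: "\<And>x. \<bar>\<psi> x\<bar> \<le> B"
  shows "sexp P (\<lambda>w. \<psi> (Xi w)) = sexp P (\<lambda>w. \<psi> (X1 w))"
proof -
  let ?f = "\<lambda>l. \<psi> (l!0)"
  have fB: "\<And>y. length y = 1 \<Longrightarrow> \<bar>?f y\<bar> \<le> B" using b by simp
  have l: "(\<lambda>k. sexp P (\<lambda>w. infconv 1 ?f k (rvec [Z] w))) \<longlonglongrightarrow> sexp P (\<lambda>w. ?f (rvec [Z] w))"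
    if "Z \<in> borel_measurable M" for Z
    by (rule ext_sexp[OF sle lcont_id1[OF c] fB]) (use that in auto)
  have eq: "sexp P (\<lambda>w. infconv 1 ?f k (rvec [Xi] w)) = sexp P (\<lambda>w. infconv 1 ?f k (rvec [X1] w))" for k
  proof -
    have "bLip1 (\<lambda>x. infconv 1 ?f k [x])"
      by (rule bLip_single) (rule infconv_bLip[of 1 ?f B, OF fB])
    from id[OF this] show ?thesis by (simp add: rvec_def)
  qed
  show ?thesis using LIMSEQ_unique[OF l[OF mi]] l[OF m1] eq by (simp add: rvec_def)
qed


lemma A_limit:
  fixes \<mu> :: "real measure" and \<phi> :: "real \<Rightarrow> real"
  assumes rd: "real_distribution \<mu>"
    and i1: "integrable \<mu> (\<lambda>x. x)" and i2: "integrable \<mu> (\<lambda>x. x^2)"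
    and m0: "(\<integral>x. x \<partial>\<mu>) = 0" and v1: "(\<integral>x. x^2 \<partial>\<mu>) = 1"
    and sl: "0 \<le> sl" "sl \<le> su"
    and fc: "continuous_on UNIV \<phi>" and fB: "\<And>x. \<bar>\<phi> x\<bar> \<le> B"
  shows "(\<lambda>n. SUP v\<in>cube n sl su. \<integral>x. \<phi> ((\<Sum>i<n. v!i * x i) / sqrt (real n)) \<partial>(PiM {..<n} (\<lambda>_. \<mu>)))
          \<longlonglongrightarrow> (SUP \<sigma>\<in>{sl..su}. \<integral>x. \<phi> (\<sigma> * x) \<partial>std_normal_distribution)"
proof -
  define A where "A n = (SUP v\<in>cube n sl su. \<integral>x. \<phi> ((\<Sum>i<n. v!i * x i) / sqrt (real n)) \<partial>(PiM {..<n} (\<lambda>_. \<mu>)))" for n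
  define G where "G \<sigma> = (\<integral>x. \<phi> (\<sigma> * x) \<partial>std_normal_distribution)" for \<sigma>
  define \<Phi> where "\<Phi> = (SUP \<sigma>\<in>{sl..su}. G \<sigma>)"
  interpret N: real_distribution std_normal_distribution by (rule real_dist_normal_dist)
  have Ibnd: "\<bar>\<integral>x. \<phi> ((\<Sum>i<n. v!i * x i) / sqrt (real n)) \<partial>(PiM {..<n} (\<lambda>_. \<mu>))\<bar> \<le> B" for n v
  proof (rule prob_bounded_integrable(2)[OF PiM_prob[OF rd i1 i2 m0 v1]])
    show "(\<lambda>x. \<phi> ((\<Sum>i<n. v!i * x i) / sqrt (real n))) \<in> borel_measurable (PiM {..<n} (\<lambda>_. \<mu>))"
      using measurable_compose[OF lin_meas[OF rd i1 i2 m0 v1] borel_measurable_continuous_onI[OF fc]]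
      by (simp add: comp_def)
  qed (rule fB)
  have Gbnd: "\<bar>G \<sigma>\<bar> \<le> B" for \<sigma>
    unfolding G_def
  proof (rule prob_bounded_integrable(2)[OF N.prob_space_axioms])
    show "(\<lambda>x. \<phi> (\<sigma> * x)) \<in> borel_measurable std_normal_distribution"
      unfolding measurable_cong_sets[OF N.events_eq_borel refl]
      by (intro borel_measurable_continuous_onI continuous_on_compose2[OF fc]) (auto intro!: continuous_intros)
  qed (rule fB)
  have cne: "cube n sl su \<noteq> {}" for n by (rule cube_ne[OF sl(2)])
  have bddA: "bdd_above ((\<lambda>v. \<integral>x. \<phi> ((\<Sum>i<n. v!i * x i) / sqrt (real n)) \<partial>(PiM {..<n} (\<lambda>_. \<mu>))) ` cube n sl su)" for n
    using Ibnd by (intro bdd_aboveI[of _ B]) (auto simp: abs_le_iff)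
  have bddG: "bdd_above (G ` {sl..su})"
    using Gbnd by (intro bdd_aboveI[of _ B]) (auto simp: abs_le_iff)
  have cube_b: "\<bar>v ! i\<bar> \<le> su" if "v \<in> cube n sl su" "i < n" for v n i
  proof -
    have "length v = n" "set v \<subseteq> {sl..su}" using that(1) unfolding cube_def by auto
    then have "v ! i \<in> {sl..su}" using that(2) by (metis nth_mem subsetD)
    then show ?thesis using sl by auto
  qed
  have su0: "0 \<le> su" using sl by simp
  show ?thesis
    unfolding A_def[symmetric] G_def[symmetric] \<Phi>_def[symmetric]
  proof (rule order_tendstoI)
    fix a assume a: "a < \<Phi>"
    then obtain \<sigma> where \<sigma>: "\<sigma> \<in> {sl..su}" "a < G \<sigma>"
      unfolding \<Phi>_def using less_cSUP_iff[OF _ bddG] sl by auto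
    define v where "v k = replicate (Suc k) \<sigma>" for k
    have "(\<lambda>k. \<integral>x. \<phi> ((\<Sum>i<Suc k. v k ! i * x i) / sqrt (real (Suc k))) \<partial>(PiM {..<Suc k} (\<lambda>_. \<mu>)))
           \<longlonglongrightarrow> (\<integral>x. \<phi> (sqrt (\<sigma>^2) * x) \<partial>std_normal_distribution)"
    proof (rule clt_integral[OF rd i1 i2 m0 v1 _ su0 _ _ _ fc fB])
      show "filterlim Suc at_top sequentially" by (rule filterlim_Suc)
      show "\<bar>v k ! i\<bar> \<le> su" if "i < Suc k" for k i proof -
        have "v k ! i = \<sigma>" using that by (simp add: v_def del: replicate_Suc)
        then show ?thesis using \<sigma> sl by auto
      qed
      have "(\<Sum>i<Suc k. (v k ! i)^2) / real (Suc k) = \<sigma>^2" for k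
      proof -
        have "(\<Sum>i<Suc k. (v k ! i)^2) = (\<Sum>i<Suc k. \<sigma>^2)"
          by (rule sum.cong) (auto simp: v_def simp del: replicate_Suc)
        then show ?thesis by simp
      qed
      then show "(\<lambda>k. (\<Sum>i<Suc k. (v k ! i)^2) / real (Suc k)) \<longlonglongrightarrow> \<sigma>^2"
        by simp
    qed simp
    then have lim: "(\<lambda>k. \<integral>x. \<phi> ((\<Sum>i<Suc k. v k ! i * x i) / sqrt (real (Suc k))) \<partial>(PiM {..<Suc k} (\<lambda>_. \<mu>)))
           \<longlonglongrightarrow> G \<sigma>" using \<sigma> sl unfolding G_def by simp
    have "\<forall>\<^sub>F k in sequentially. a < (\<integral>x. \<phi> ((\<Sum>i<Suc k. v k ! i * x i) / sqrt (real (Suc k))) \<partial>(PiM {..<Suc k} (\<lambda>_. \<mu>)))"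
      by (rule order_tendstoD(1)[OF lim \<sigma>(2)])
    then have "\<forall>\<^sub>F k in sequentially. a < A (Suc k)"
    proof (rule eventually_mono)
      fix k assume "a < (\<integral>x. \<phi> ((\<Sum>i<Suc k. v k ! i * x i) / sqrt (real (Suc k))) \<partial>(PiM {..<Suc k} (\<lambda>_. \<mu>)))"
      also have "\<dots> \<le> A (Suc k)" unfolding A_def
        by (rule cSUP_upper[OF _ bddA]) (use \<sigma> in \<open>auto simp: v_def cube_def\<close>)
      finally show "a < A (Suc k)" .
    qed
    then show "\<forall>\<^sub>F n in sequentially. a < A n" using eventually_sequentially_Suc[of "\<lambda>n. a < A n"] by blast
  next
    fix a assume a: "\<Phi> < a"
    show "\<forall>\<^sub>F n in sequentially. A n < a"
    proof (rule ccontr)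
      assume "\<not> ?thesis"
      then have "\<exists>n\<ge>N. 1 \<le> n \<and> a \<le> A n" for N
        unfolding eventually_sequentially by (metis le_trans max.cobounded1 max.cobounded2 not_less)
      then have "\<exists>r::nat\<Rightarrow>nat. strict_mono r \<and> (\<forall>k. 1 \<le> r k \<and> a \<le> A (r k))"
        by (rule frequently_subseq)
      then obtain r :: "nat \<Rightarrow> nat" where r: "strict_mono r" "\<And>k. 1 \<le> r k \<and> a \<le> A (r k)"
        by blast
      define c where "c = (\<Phi> + a) / 2"
      have c: "\<Phi> < c" "c < a" using a by (auto simp: c_def)
      have "\<exists>v\<in>cube (r k) sl su. c < (\<integral>x. \<phi> ((\<Sum>i<r k. v!i * x i) / sqrt (real (r k))) \<partial>(PiM {..<r k} (\<lambda>_. \<mu>)))" for k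
      proof -
        have "c < A (r k)" using r(2)[of k] c by simp
        then show ?thesis unfolding A_def by (subst (asm) less_cSUP_iff[OF cne bddA])
      qed
      then obtain v where v: "\<And>k. v k \<in> cube (r k) sl su"
        "\<And>k. c < (\<integral>x. \<phi> ((\<Sum>i<r k. v k!i * x i) / sqrt (real (r k))) \<partial>(PiM {..<r k} (\<lambda>_. \<mu>)))"
        by metis
      define avg where "avg k = (\<Sum>i<r k. (v k ! i)^2) / real (r k)" for k
      have avg_in: "avg k \<in> {sl^2..su^2}" for k
      proof -
        have rk: "real (r k) > 0" using r(2)[of k] by simp
        have b: "sl^2 \<le> (v k ! i)^2 \<and> (v k ! i)^2 \<le> su^2" if "i < r k" for i
        proof -
          have "v k ! i \<in> set (v k)" using v(1)[of k] that unfolding cube_def by auto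
          then have "sl \<le> v k ! i" "v k ! i \<le> su" using v(1)[of k] unfolding cube_def by auto
          then show ?thesis using sl by (auto intro: power_mono)
        qed
        have "(\<Sum>i<r k. sl^2) \<le> (\<Sum>i<r k. (v k ! i)^2)" by (rule sum_mono) (use b in auto)
        moreover have "(\<Sum>i<r k. (v k ! i)^2) \<le> (\<Sum>i<r k. su^2)" by (rule sum_mono) (use b in auto)
        ultimately show ?thesis unfolding avg_def using rk by (auto simp: field_simps)
      qed
      have "seq_compact {sl^2..su^2}" by (rule compact_imp_seq_compact[OF compact_Icc])
      then obtain l q where lq: "l \<in> {sl^2..su^2}" "strict_mono q" "(avg \<circ> q) \<longlonglongrightarrow> l"
        unfolding seq_compact_def using avg_in by metis
      have "(\<lambda>k. \<integral>x. \<phi> ((\<Sum>i<(r \<circ> q) k. (v \<circ> q) k ! i * x i) / sqrt (real ((r \<circ> q) k))) \<partial>(PiM {..<(r \<circ> q) k} (\<lambda>_. \<mu>)))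
           \<longlonglongrightarrow> (\<integral>x. \<phi> (sqrt l * x) \<partial>std_normal_distribution)"
      proof (rule clt_integral[OF rd i1 i2 m0 v1 _ su0 _ _ _ fc fB])
        show "filterlim (r \<circ> q) at_top sequentially"
          by (rule filterlim_subseq) (rule strict_mono_o[OF r(1) lq(2)])
        show "\<bar>(v \<circ> q) k ! i\<bar> \<le> su" if "i < (r \<circ> q) k" for k i
          using cube_b[OF v(1) that[unfolded comp_def]] by simp
        show "(\<lambda>k. (\<Sum>i<(r \<circ> q) k. ((v \<circ> q) k ! i)^2) / real ((r \<circ> q) k)) \<longlonglongrightarrow> l"
          using lq(3) by (simp add: avg_def comp_def)
        show "0 \<le> l" using lq(1) by (auto intro: order_trans[OF zero_le_power2])
      qed
      then have lim: "(\<lambda>k. \<integral>x. \<phi> ((\<Sum>i<r (q k). v (q k) ! i * x i) / sqrt (real (r (q k)))) \<partial>(PiM {..<r (q k)} (\<lambda>_. \<mu>)))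
           \<longlonglongrightarrow> G (sqrt l)" unfolding G_def by (simp add: comp_def)
      have "c \<le> G (sqrt l)"
        by (rule tendsto_lowerbound[OF lim]) (use v(2) in \<open>auto intro!: always_eventually less_imp_le\<close>)
      moreover have "G (sqrt l) \<le> \<Phi>"
      proof -
        have "sqrt l \<in> {sl..su}"
          using lq(1) sl real_sqrt_le_mono[of "sl^2" l] real_sqrt_le_mono[of l "su^2"] by auto
        then show ?thesis unfolding \<Phi>_def by (rule cSUP_upper[OF _ bddG])
      qed
      ultimately show False using c by simp
    qed
  qed
qed


theorem mainTheorem2:
  fixes M :: "'w measure" and P :: "'w measure set"
    and X V \<eta> :: "nat \<Rightarrow> 'w \<Rightarrow> real" and \<mu> :: "nat \<Rightarrow> real measure"
    and W :: "'w \<Rightarrow> real" and sl su :: real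
  assumes space: "sle_space M P"
    and sig: "0 \<le> sl" "sl \<le> su"
    and meas: "\<And>i. i \<ge> 1 \<Longrightarrow> V i \<in> borel_measurable M"
              "\<And>i. i \<ge> 1 \<Longrightarrow> \<eta> i \<in> borel_measurable M"
              "W \<in> borel_measurable M"
    and prod: "\<And>i w. i \<ge> 1 \<Longrightarrow> X i w = V i w * \<eta> i w"
    and Vdist: "\<And>i. i \<ge> 1 \<Longrightarrow> maximal_dist P (V i) sl su"
    and etadist: "\<And>i. i \<ge> 1 \<Longrightarrow> classical_dist P (\<eta> i) (\<mu> i) \<and> standardized (\<mu> i)"
    and Veta: "\<And>i. i \<ge> 1 \<Longrightarrow> sl_indep P [V i] [\<eta> i]"
    and ident: "\<And>i \<phi>. i \<ge> 1 \<Longrightarrow> bLip1 \<phi> \<Longrightarrow>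
                  sexp P (\<lambda>w. \<phi> (X i w)) = sexp P (\<lambda>w. \<phi> (X 1 w))"
    and semiG_indep: "\<And>n. n \<ge> 1 \<Longrightarrow>
          sl_indep P (map V [1..<n+1]) (map \<eta> [1..<n+1]) \<and>
          (\<forall>i. 1 \<le> i \<and> i < n \<longrightarrow> sl_indep P (map V [1..<i+1]) [V (i+1)]) \<and>
          classical_indep P (map \<eta> [1..<n+1]) (\<lambda>j. \<mu> (j+1))"
    and mean: "sexp P (X 1) = 0" "- sexp P (\<lambda>w. - X 1 w) = 0"
    and var: "- sexp P (\<lambda>w. -((X 1 w)^2)) = sl^2" "sexp P (\<lambda>w. (X 1 w)^2) = su^2"
    and Wdist: "semiG_normal M P W sl su"
  shows "\<forall>\<phi>::real \<Rightarrow> real. continuous_on UNIV \<phi> \<and> bounded (range \<phi>) \<longrightarrow>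
           (\<lambda>n. sexp P (\<lambda>w. \<phi> ((\<Sum>i=1..n. X i w) / sqrt (real n))))
             \<longlonglongrightarrow> sexp P (\<lambda>w. \<phi> (W w))"
proof (intro allI impI)
  fix \<phi> :: "real \<Rightarrow> real"
  assume \<phi>: "continuous_on UNIV \<phi> \<and> bounded (range \<phi>)"
  have fc: "continuous_on UNIV \<phi>" using \<phi> by simp
  obtain B where fB: "\<And>x. \<bar>\<phi> x\<bar> \<le> B" using \<phi> unfolding bounded_iff by auto
  have ab: "sl \<le> su" by (rule sig(2))
  define \<Phi> where "\<Phi> = (SUP \<sigma>\<in>{sl..su}. \<integral>x. \<phi> (\<sigma> * x) \<partial>std_normal_distribution)"
  have EW: "sexp P (\<lambda>w. \<phi> (W w)) = \<Phi>"
  proof -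
    obtain V' \<epsilon> where W': "V' \<in> borel_measurable M" "\<epsilon> \<in> borel_measurable M"
      "maximal_dist P V' sl su" "classical_dist P \<epsilon> std_normal_distribution"
      "sl_indep P [V'] [\<epsilon>]" "\<And>w. W w = V' w * \<epsilon> w"
      using Wdist unfolding semiG_normal_def by blast
    have "sexp P (\<lambda>w. \<phi> (V' w * \<epsilon> w)) = \<Phi>"
      unfolding \<Phi>_def by (rule rep1[OF space W'(3) ab W'(4) W'(5) W'(1) W'(2) fc fB])
    then show ?thesis using W'(6) by simp
  qed
  have mu: "prob_space (\<mu> i)" "sets (\<mu> i) = sets borel" "integrable (\<mu> i) (\<lambda>x. x)" "integrable (\<mu> i) (\<lambda>x. x^2)"
     "(\<integral>x. x \<partial>\<mu> i) = 0" "(\<integral>x. x^2 \<partial>\<mu> i) = 1" if "i \<ge> 1" for i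
    using etadist[OF that] unfolding classical_dist_def standardized_def by auto
  have Xm: "X i \<in> borel_measurable M" if "i \<ge> 1" for i
  proof -
    have "X i = (\<lambda>w. V i w * \<eta> i w)" using prod[OF that] by auto
    then show ?thesis using meas(1,2)[OF that] by simp
  qed
  define A0 where "A0 n = (SUP v\<in>cube n sl su. \<integral>x. \<phi> ((\<Sum>i<n. v!i * x i) / sqrt (real n)) \<partial>(PiM {..<n} (\<lambda>j. \<mu> (j+1))))" for n
  have ES: "sexp P (\<lambda>w. \<phi> ((\<Sum>i=1..n. X i w) / sqrt (real n))) = A0 n" if n1: "n \<ge> 1" for n
  proof -
    obtain k where k: "n = Suc k" using n1 by (cases n) auto
    have indV: "sl_indep P (map V [1..<i+1]) [V (i+1)]" if "i \<ge> 1" for i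
      using semiG_indep[of "i+1"] that by auto
    have mr: "maxrep P (map V [1..<k+2]) (cube (k+1) sl su)"
      by (rule maxrep_cube[OF space ab Vdist indV meas(1)])
    have sg: "sl_indep P (map V [1..<n+1]) (map \<eta> [1..<n+1])" "classical_indep P (map \<eta> [1..<n+1]) (\<lambda>j. \<mu> (j+1))"
      using semiG_indep[OF n1] by auto
    have "sexp P (\<lambda>w. \<phi> ((\<Sum>i<n. (map V [1..<n+1] ! i) w * (map \<eta> [1..<n+1] ! i) w) / sqrt (real n))) = A0 n"
      unfolding A0_def
    proof (rule rep_sum[OF space _ cube_ne[OF ab] _ _ _ sg(1) sg(2) _ _ _ _ fc fB])
      show "maxrep P (map V [1..<n+1]) (cube n sl su)" using mr k by simp
      show "cube n sl su \<subseteq> {v. length v = n}" by (auto simp: cube_def)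
      show "\<And>j. prob_space (\<mu> (j+1))" "\<And>j. sets (\<mu> (j+1)) = sets borel" using mu by auto
      show "\<And>Y. Y \<in> set (map V [1..<n+1]) \<Longrightarrow> Y \<in> borel_measurable M" using meas(1) by auto
      show "\<And>Y. Y \<in> set (map \<eta> [1..<n+1]) \<Longrightarrow> Y \<in> borel_measurable M" using meas(2) by auto
    qed simp_all
    moreover have "(\<Sum>i=1..n. X i w) = (\<Sum>i<n. (map V [1..<n+1] ! i) w * (map \<eta> [1..<n+1] ! i) w)" for w
    proof -
      have "(\<Sum>i=1..n. X i w) = (\<Sum>i<n. X (Suc i) w)" using sum.atLeast1_atMost_eq[of "\<lambda>i. X i w" n] by simp
      also have "\<dots> = (\<Sum>i<n. (map V [1..<n+1] ! i) w * (map \<eta> [1..<n+1] ! i) w)"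
        by (rule sum.cong) (auto simp: prod nth_map nth_upt simp del: upt_Suc)
      finally show ?thesis .
    qed
    ultimately show ?thesis by simp
  qed
  have A0lim: "A0 \<longlonglongrightarrow> \<Phi>"
  proof (cases "su = 0")
    case True
    then have s0: "sl = 0" using sig by simp
    have cube0: "cube n 0 0 = {replicate n 0}" for n
      by (auto simp: cube_def intro!: replicate_eqI)
    have pr: "prob_space (PiM {..<n} (\<lambda>j. \<mu> (j+1)))" for n
      by (rule prob_space_PiM) (use mu in auto)
    have "A0 n = \<phi> 0" for n
      unfolding A0_def True s0 cube0 using prob_space.prob_space[OF pr[of n]] by simp
    moreover have "\<Phi> = \<phi> 0"
      unfolding \<Phi>_def True s0 using prob_space.prob_space[OF prob_space_normal_density] by simp
    ultimately have "A0 = (\<lambda>n. \<phi> 0)" "\<Phi> = \<phi> 0" by auto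
    then show ?thesis by simp
  next
    case False
    then have su0: "su > 0" using sig by simp
    have same: "\<mu> i = \<mu> 1" if i: "i \<ge> 1" for i
    proof (rule same_law[OF mu(1,2,4,6)[OF i] mu(1,2,4,6)[of 1] sig(1) ab su0])
      fix \<psi> :: "real \<Rightarrow> real" and B' assume c: "continuous_on UNIV \<psi>" and b: "\<And>x. \<bar>\<psi> x\<bar> \<le> B'"
      have r: "sexp P (\<lambda>w. \<psi> (X j w)) = (SUP v\<in>{sl..su}. \<integral>x. \<psi> (v * x) \<partial>\<mu> j)" if j: "j \<ge> 1" for j
      proof -
        have "sexp P (\<lambda>w. \<psi> (V j w * \<eta> j w)) = (SUP v\<in>{sl..su}. \<integral>x. \<psi> (v * x) \<partial>\<mu> j)"
          by (rule rep1[OF space Vdist[OF j] ab _ Veta[OF j] meas(1)[OF j] meas(2)[OF j] c b])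
             (use etadist[OF j] in auto)
        then show ?thesis using prod[OF j] by simp
      qed
      have "sexp P (\<lambda>w. \<psi> (X i w)) = sexp P (\<lambda>w. \<psi> (X 1 w))"
        by (rule ident_ext[OF space Xm[of 1] Xm[OF i] ident[OF i] c b]) simp_all
      then show "(SUP v\<in>{sl..su}. \<integral>x. \<psi> (v * x) \<partial>\<mu> i) = (SUP v\<in>{sl..su}. \<integral>x. \<psi> (v * x) \<partial>\<mu> 1)"
        using r[OF i] r[of 1] by simp
    qed simp_all
    have eqA: "A0 n = (SUP v\<in>cube n sl su. \<integral>x. \<phi> ((\<Sum>i<n. v!i * x i) / sqrt (real n)) \<partial>(PiM {..<n} (\<lambda>_. \<mu> 1)))" for n
    proof -
      have "PiM {..<n} (\<lambda>j. \<mu> (j+1)) = PiM {..<n} (\<lambda>_. \<mu> 1)" by (rule PiM_cong) (use same[of "Suc _"] in auto)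
      then show ?thesis unfolding A0_def by simp
    qed
    have rd: "real_distribution (\<mu> 1)"
      using mu(1,2)[of 1] unfolding real_distribution_def real_distribution_axioms_def by simp
    have "A0 = (\<lambda>n. SUP v\<in>cube n sl su. \<integral>x. \<phi> ((\<Sum>i<n. v!i * x i) / sqrt (real n)) \<partial>(PiM {..<n} (\<lambda>_. \<mu> 1)))"
      using eqA by (intro ext)
    then show ?thesis
      unfolding \<Phi>_def using A_limit[OF rd mu(3-6)[of 1] sig fc fB] by simp
  qed
  show "(\<lambda>n. sexp P (\<lambda>w. \<phi> ((\<Sum>i=1..n. X i w) / sqrt (real n)))) \<longlonglongrightarrow> sexp P (\<lambda>w. \<phi> (W w))"
    unfolding EW
  proof (rule Lim_transform_eventually[OF A0lim])
    show "\<forall>\<^sub>F n in sequentially. A0 n = sexp P (\<lambda>w. \<phi> ((\<Sum>i=1..n. X i w) / sqrt (real n)))"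
      using eventually_ge_at_top[of 1] by eventually_elim (rule ES[symmetric])
  qed
qed


end
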